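(* Let $H$ be a $\Lambda$-module and $k\ge1$. (i) For every $z\in S^1$ and every character $\chi\colon H\to S^1$ factoring through $H/(t^k-1)H$, the map $\alpha_{(z,\chi)}\colon\mathbb{Z}\ltimes H\to U(k)$ is a group homomorphism. (ii) If $\chi$ does not factor through $H/(t^l-1)H$ for any $1\le l<k$, then $\alpha_{(z,\chi)}$ is irreducible. (iii) Conversely, every irreducible unitary representation $\mathbb{Z}\ltimes H\to U(k)$ is conjugate (by a unitary matrix) to $\alpha_{(z,\chi)}$ for some $z\in S^1$ and some character $\chi\colon H\to H/(t^k-1)H\to S^1$.
   Context: $\Lambda=\mathbb{Z}[t,t^{-1}]$. For a $\Lambda$-module $H$, $\mathbb{Z}\ltimes H$ denotes the group with underlying set $\mathbb{Z}\times H$ and multiplication $(n,h)(m,h')=(n+m,\,t^mh+h')$. For $z\in S^1$ and a character $\chi\colon H\to S^1$ factoring through $H/(t^k-1)H$, define $\alpha_{(z,\chi)}(n,h)=z^n A^n\,\mathrm{diag}(\chi(h),\chi(th),\dots,\chi(t^{k-1}h))$, where $A$ is the $k\times k$ cyclic permutation matrix with $Ae_i=e_{i+1}$ for $i<k$ and $Ae_k=e_1$ (i.e. ones on the subdiagonal and in the top-right corner). *)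

theory Defs
  imports Complex_Main "Jordan_Normal_Form.Matrix"
begin

text \<open>A module over Lambda = Z[t,t^-1] is an abelian group H together with an
  additive automorphism T (the action of t).\<close>

definition lambda_module :: "('h::ab_group_add \<Rightarrow> 'h) \<Rightarrow> bool" where
  "lambda_module T \<longleftrightarrow> bij T \<and> (\<forall>a b. T (a + b) = T a + T b)"

definition tpow :: "('h \<Rightarrow> 'h) \<Rightarrow> int \<Rightarrow> 'h \<Rightarrow> 'h" where
  "tpow T m = (if 0 \<le> m then T ^^ nat m else (inv_into UNIV T) ^^ nat (- m))"

definition sd_mult :: "('h::ab_group_add \<Rightarrow> 'h) \<Rightarrow> int \<times> 'h \<Rightarrow> int \<times> 'h \<Rightarrow> int \<times> 'h" where
  "sd_mult T g g' = (fst g + fst g', tpow T (fst g') (snd g) + snd g')"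

definition character :: "('h::ab_group_add \<Rightarrow> complex) \<Rightarrow> bool" where
  "character \<chi> \<longleftrightarrow> (\<forall>a. cmod (\<chi> a) = 1) \<and> (\<forall>a b. \<chi> (a + b) = \<chi> a * \<chi> b)"

text \<open>chi factors through H/(t^l - 1)H, i.e. chi vanishes (is 1) on (t^l - 1)H.\<close>
definition factors_through :: "('h::ab_group_add \<Rightarrow> 'h) \<Rightarrow> nat \<Rightarrow> ('h \<Rightarrow> complex) \<Rightarrow> bool" where
  "factors_through T l \<chi> \<longleftrightarrow> (\<forall>h. \<chi> ((T ^^ l) h - h) = 1)"

definition ctrans :: "complex mat \<Rightarrow> complex mat" where
  "ctrans A = mat (dim_col A) (dim_row A) (\<lambda>(i, j). cnj (A $$ (j, i)))"

definition unitary_mat :: "nat \<Rightarrow> complex mat \<Rightarrow> bool" where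
  "unitary_mat k U \<longleftrightarrow> U \<in> carrier_mat k k \<and> U * ctrans U = 1\<^sub>m k \<and> ctrans U * U = 1\<^sub>m k"

definition mat_inv :: "nat \<Rightarrow> complex mat \<Rightarrow> complex mat" where
  "mat_inv k A = (THE B. B \<in> carrier_mat k k \<and> A * B = 1\<^sub>m k \<and> B * A = 1\<^sub>m k)"

definition mat_ipow :: "nat \<Rightarrow> complex mat \<Rightarrow> int \<Rightarrow> complex mat" where
  "mat_ipow k A n = (if 0 \<le> n then A ^\<^sub>m nat n else (mat_inv k A) ^\<^sub>m nat (- n))"

definition unitary_rep :: "('h::ab_group_add \<Rightarrow> 'h) \<Rightarrow> nat \<Rightarrow> (int \<times> 'h \<Rightarrow> complex mat) \<Rightarrow> bool" where
  "unitary_rep T k \<rho> \<longleftrightarrow> (\<forall>g. unitary_mat k (\<rho> g)) \<and>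
     (\<forall>g g'. \<rho> (sd_mult T g g') = \<rho> g * \<rho> g')"

definition invariant_subspace :: "nat \<Rightarrow> (int \<times> 'h \<Rightarrow> complex mat) \<Rightarrow> complex vec set \<Rightarrow> bool" where
  "invariant_subspace k \<rho> W \<longleftrightarrow> W \<subseteq> carrier_vec k \<and> 0\<^sub>v k \<in> W \<and>
     (\<forall>v\<in>W. \<forall>w\<in>W. v + w \<in> W) \<and> (\<forall>c. \<forall>v\<in>W. c \<cdot>\<^sub>v v \<in> W) \<and>
     (\<forall>g. \<forall>v\<in>W. \<rho> g *\<^sub>v v \<in> W)"

definition irreducible_rep :: "nat \<Rightarrow> (int \<times> 'h \<Rightarrow> complex mat) \<Rightarrow> bool" where
  "irreducible_rep k \<rho> \<longleftrightarrow> (\<forall>W. invariant_subspace k \<rho> W \<longrightarrow> W = {0\<^sub>v k} \<or> W = carrier_vec k)"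

text \<open>Cyclic permutation matrix: A e_i = e_(i+1), A e_k = e_1 (0-indexed here).\<close>
definition cyc_mat :: "nat \<Rightarrow> complex mat" where
  "cyc_mat k = mat k k (\<lambda>(i, j). if i = Suc j mod k then 1 else 0)"

definition alpha :: "('h::ab_group_add \<Rightarrow> 'h) \<Rightarrow> nat \<Rightarrow> complex \<Rightarrow> ('h \<Rightarrow> complex) \<Rightarrow> int \<times> 'h \<Rightarrow> complex mat" where
  "alpha T k z \<chi> g = (z powi (fst g)) \<cdot>\<^sub>m (mat_ipow k (cyc_mat k) (fst g) *
      mat k k (\<lambda>(i, j). if i = j then \<chi> ((T ^^ i) (snd g)) else 0))"

end

theory Submission
  imports Defs "Jordan_Normal_Form.VS_Connect" "Jordan_Normal_Form.Char_Poly"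
begin

definition subsp :: "nat \<Rightarrow> 'a::field vec set \<Rightarrow> bool" where
  "subsp n W \<longleftrightarrow> W \<subseteq> carrier_vec n \<and> 0\<^sub>v n \<in> W \<and> (\<forall>v\<in>W. \<forall>w\<in>W. v + w \<in> W) \<and> (\<forall>c. \<forall>v\<in>W. c \<cdot>\<^sub>v v \<in> W)"

lemma exists_eigenvector:
  fixes C :: "complex mat"
  assumes C: "C \<in> carrier_mat d d" and d: "d > 0"
  shows "\<exists>x \<mu>. x \<in> carrier_vec d \<and> x \<noteq> 0\<^sub>v d \<and> C *\<^sub>v x = \<mu> \<cdot>\<^sub>v x"
proof -
  obtain as where cp: "char_poly C = (\<Prod>a\<leftarrow>as. [:- a, 1:])" and len: "length as = d"
    using char_poly_factorized[OF C] by blast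
  then obtain a as' where as: "as = a # as'" using d by (cases as) auto
  have "poly (char_poly C) a = 0" unfolding cp as by simp
  hence "eigenvalue C a" using eigenvalue_root_char_poly[OF C] by simp
  then obtain x where "eigenvector C x a" unfolding eigenvalue_def by blast
  thus ?thesis unfolding eigenvector_def using C by auto
qed

context vec_space
begin

lemma subsp_submodule: "subsp n W \<Longrightarrow> submodule class_ring W V"
  unfolding subsp_def
  by (intro submodule.intro, unfold_locales, auto)

lemma li_bound: "A \<subseteq> carrier_vec n \<Longrightarrow> lin_indpt A \<Longrightarrow> finite A \<and> card A \<le> n"
  using li_le_dim[OF fin_dim, of A] dim_is_n by auto

definition mu :: "'a vec set \<Rightarrow> nat" where
  "mu W = Max {card A | A. A \<subseteq> W \<and> lin_indpt A}"


lemma mu_set_bdd: assumes "subsp n W"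
  shows "finite {card A | A. A \<subseteq> W \<and> lin_indpt A}" "{} \<in> {A. A \<subseteq> W \<and> lin_indpt A}"
proof -
  have WC: "W \<subseteq> carrier_vec n" using assms unfolding subsp_def by blast
  have "{card A | A. A \<subseteq> W \<and> lin_indpt A} \<subseteq> {..n}"
  proof
    fix x assume "x \<in> {card A | A. A \<subseteq> W \<and> lin_indpt A}"
    then obtain A where "x = card A" "A \<subseteq> W" "lin_indpt A" by blast
    thus "x \<in> {..n}" using li_bound[of A] WC by auto
  qed
  thus "finite {card A | A. A \<subseteq> W \<and> lin_indpt A}" using finite_subset by blast
  show "{} \<in> {A. A \<subseteq> W \<and> lin_indpt A}" using lin_dep_def by auto
qed

lemma mu_obtain: assumes "subsp n W"
  obtains A where "A \<subseteq> W" "lin_indpt A" "card A = mu W" "finite A"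
proof -
  have "mu W \<in> {card A | A. A \<subseteq> W \<and> lin_indpt A}"
    unfolding mu_def proof (rule Max_in)
    show "finite {card A |A. A \<subseteq> W \<and> lin_indpt A}" using mu_set_bdd[OF assms] by blast
    show "{card A |A. A \<subseteq> W \<and> lin_indpt A} \<noteq> {}" using mu_set_bdd(2)[OF assms] by blast
  qed
  then obtain A where "A \<subseteq> W" "lin_indpt A" "card A = mu W" by auto
  moreover have "finite A"
  proof -
    have "A \<subseteq> carrier_vec n" using \<open>A \<subseteq> W\<close> assms unfolding subsp_def by blast
    thus ?thesis using li_bound \<open>lin_indpt A\<close> by blast
  qed
  ultimately show ?thesis using that by metis
qed

lemma mu_ge: assumes "subsp n W" "A \<subseteq> W" "lin_indpt A" shows "card A \<le> mu W"
  unfolding mu_def using mu_set_bdd[OF assms(1)] assms by (intro Max_ge) blast+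

lemma mu_span: assumes W: "subsp n W" and A: "A \<subseteq> W" "lin_indpt A" "card A = mu W" "finite A"
  shows "W = span A"
proof
  have WC: "W \<subseteq> carrier_vec n" using W unfolding subsp_def by auto
  show "span A \<subseteq> W" using span_is_subset[OF A(1) subsp_submodule[OF W]] .
  show "W \<subseteq> span A"
  proof
    fix w assume w: "w \<in> W"
    show "w \<in> span A"
    proof (rule ccontr)
      assume nw: "w \<notin> span A"
      have AC: "A \<subseteq> carrier_vec n" using A WC by auto
      have WCw: "w \<in> carrier_vec n" using w WC by auto
      have wA: "w \<notin> A" using nw in_own_span[OF AC] by auto
      have "lin_indpt (A \<union> {w})" using lin_dep_iff_in_span[OF AC A(2) WCw wA] nw by auto
      moreover have "A \<union> {w} \<subseteq> W" using A w by blast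
      ultimately have "card (A \<union> {w}) \<le> mu W" using mu_ge[OF W] by blast
      moreover have "card (A \<union> {w}) = Suc (card A)" using wA A(4) by auto
      ultimately show False using A by auto
    qed
  qed
qed

lemma mu_less: assumes W: "subsp n W" and W': "subsp n W'" and sub: "W' \<subseteq> W" and ne: "W' \<noteq> W"
  shows "mu W' < mu W"
proof -
  obtain A where A: "A \<subseteq> W'" "lin_indpt A" "card A = mu W'" "finite A" using mu_obtain[OF W'] by blast
  obtain w where w: "w \<in> W" "w \<notin> W'" using sub ne by blast
  have WC: "W \<subseteq> carrier_vec n" using W unfolding subsp_def by auto
  have AC: "A \<subseteq> carrier_vec n" using A sub WC by auto
  have nw: "w \<notin> span A" using mu_span[OF W' A] w by auto
  have wA: "w \<notin> A" using w A by auto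
  have WCw: "w \<in> carrier_vec n" using w WC by auto
  have "lin_indpt (A \<union> {w})" using lin_dep_iff_in_span[OF AC A(2) WCw wA] nw by auto
  moreover have "A \<union> {w} \<subseteq> W" using A w sub by blast
  ultimately have "card (A \<union> {w}) \<le> mu W" using mu_ge[OF W] by blast
  moreover have "card (A \<union> {w}) = Suc (card A)" using wA A(4) by auto
  ultimately show ?thesis using A by auto
qed

end

lemma EIS:
  fixes F :: "complex mat"
  assumes W: "subsp n W" and ne: "W \<noteq> {0\<^sub>v n}" and F: "F \<in> carrier_mat n n"
    and inv: "\<forall>w\<in>W. F *\<^sub>v w \<in> W"
  shows "\<exists>w\<in>W. w \<noteq> 0\<^sub>v n \<and> (\<exists>c. F *\<^sub>v w = c \<cdot>\<^sub>v w)"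
proof -
  interpret V: vec_space "TYPE(complex)" n .
  obtain A where A: "A \<subseteq> W" "V.lin_indpt A" "card A = V.mu W" "finite A" using V.mu_obtain[OF W] by blast
  have span: "W = V.span A" using V.mu_span[OF W A] .
  have AC: "A \<subseteq> carrier_vec n" using A W unfolding subsp_def by blast
  obtain bs where bs: "set bs = A" "distinct bs" using finite_distinct_list[OF A(4)] by blast
  define d where "d = length bs"
  have "A \<noteq> {}"
  proof
    assume "A = {}"
    hence "W = {0\<^sub>v n}" using span V.span_empty by simp
    thus False using ne by simp
  qed
  hence d: "d > 0" using bs d_def by auto
  define P where "P = mat_of_cols n bs"
  have P: "P \<in> carrier_mat n d" unfolding P_def d_def by simp
  have bsC: "set bs \<subseteq> carrier_vec n" using bs AC by simp
  have dimbs: "\<forall>w\<in>set bs. dim_vec w = n" using bsC by auto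
  have spanW: "V.span_list bs = W" using V.span_list_as_span[OF bsC] span bs by simp
  have Px: "P *\<^sub>v x = V.lincomb_list (\<lambda>i. x $ i) bs" if x: "x \<in> carrier_vec d" for x
  proof -
    have "vec (length bs) (\<lambda>i. x $ i) = x" using x d_def by auto
    thus ?thesis using V.lincomb_list_as_mat_mult[OF dimbs, where c="\<lambda>i. x $ i"] P_def by simp
  qed
  have inW: "P *\<^sub>v x \<in> W" if x: "x \<in> carrier_vec d" for x
    using Px[OF x] spanW V.in_span_listI[where c="\<lambda>i. x $ i" and vs=bs] by auto
  have coords: "\<exists>y\<in>carrier_vec d. v = P *\<^sub>v y" if v: "v \<in> W" for v
  proof -
    from v spanW obtain c where "v = V.lincomb_list c bs" by (metis V.in_span_listE)
    hence "v = P *\<^sub>v vec d c" using V.lincomb_list_as_mat_mult[OF dimbs, where c=c] P_def d_def by simp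
    thus ?thesis by auto
  qed
  have inj: "x = 0\<^sub>v d" if x: "x \<in> carrier_vec d" and Px0: "P *\<^sub>v x = 0\<^sub>v n" for x
  proof -
    define f where "f = (\<lambda>v. x $ find_index bs v)"
    have fi: "find_index bs (bs ! i) = i" if "i < length bs" for i
      using find_index_in_set[where x="bs ! i" and xs=bs] find_index_leq_length[where x="bs ! i" and xs=bs] that bs(2)
        nth_eq_iff_index_eq by (metis nth_mem)
    have "V.lincomb f (set bs) = V.lincomb_list (\<lambda>i. f (bs ! i)) bs"
      using V.lincomb_as_lincomb_list_distinct[OF bsC bs(2)] .
    also have "(\<lambda>i. f (bs ! i)) = (\<lambda>i. if i < length bs then x $ i else f (bs ! i))"
      using fi f_def by auto
    also have "V.lincomb_list \<dots> bs = V.lincomb_list (\<lambda>i. x $ i) bs"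
      unfolding V.lincomb_list_def by (intro arg_cong[where f = V.sumlist] map_cong) auto
    also have "\<dots> = 0\<^sub>v n" using Px[OF x] Px0 by simp
    finally have lc: "V.lincomb f A = 0\<^sub>v n" using bs by simp
    have "f \<in> A \<rightarrow> {0}" using V.not_lindepD[OF A(2) A(4) subset_refl _ lc] by simp
    have "x $ i = 0" if "i < d" for i
    proof -
      have "bs ! i \<in> A" using that bs d_def by auto
      hence "f (bs ! i) = 0" using \<open>f \<in> A \<rightarrow> {0}\<close> by blast
      thus ?thesis using fi[of i] that d_def f_def by simp
    qed
    thus ?thesis using x by (intro eq_vecI) auto
  qed
  have "\<forall>j. \<exists>y. j < d \<longrightarrow> y \<in> carrier_vec d \<and> F *\<^sub>v (bs ! j) = P *\<^sub>v y"
  proof (intro allI impI)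
    fix j show "\<exists>y. j < d \<longrightarrow> y \<in> carrier_vec d \<and> F *\<^sub>v (bs ! j) = P *\<^sub>v y"
    proof (cases "j < d")
      case True
      hence "bs ! j \<in> W" using bs A d_def by auto
      thus ?thesis using coords inv by blast
    qed auto
  qed
  then obtain ys where ys: "\<And>j. j < d \<Longrightarrow> ys j \<in> carrier_vec d \<and> F *\<^sub>v (bs ! j) = P *\<^sub>v ys j"
    by metis
  define C where "C = mat d d (\<lambda>(i,j). ys j $ i)"
  have C: "C \<in> carrier_mat d d" unfolding C_def by simp
  have FP: "F * P = P * C"
  proof (rule eq_matI)
    fix i j assume i: "i < dim_row (P * C)" and j: "j < dim_col (P * C)"
    hence i': "i < n" and j': "j < d" using P C by auto
    have colP: "col P j = bs ! j" unfolding P_def using j' d_def bsC by (intro col_mat_of_cols) auto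
    have colC: "col C j = ys j" unfolding C_def using j' ys[OF j'] by (intro eq_vecI) auto
    have "(F * P) $$ (i, j) = row F i \<bullet> col P j" using i' j' F P by simp
    also have "\<dots> = (F *\<^sub>v (bs ! j)) $ i" using colP i' F by simp
    also have "\<dots> = (P *\<^sub>v ys j) $ i" using ys[OF j'] by simp
    also have "\<dots> = row P i \<bullet> col C j" using colC i' P by simp
    also have "\<dots> = (P * C) $$ (i, j)" using i' j' P C by simp
    finally show "(F * P) $$ (i, j) = (P * C) $$ (i, j)" .
  qed (insert F P C, auto)
  obtain x \<mu> where x: "x \<in> carrier_vec d" "x \<noteq> 0\<^sub>v d" "C *\<^sub>v x = \<mu> \<cdot>\<^sub>v x"
    using exists_eigenvector[OF C d] by blast
  have "F *\<^sub>v (P *\<^sub>v x) = (F * P) *\<^sub>v x" using F P x by (simp add: assoc_mult_mat_vec)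
  also have "\<dots> = P *\<^sub>v (C *\<^sub>v x)" unfolding FP using P C x by (simp add: assoc_mult_mat_vec)
  also have "\<dots> = \<mu> \<cdot>\<^sub>v (P *\<^sub>v x)" using x P by (simp add: mult_mat_vec)
  finally have ev: "F *\<^sub>v (P *\<^sub>v x) = \<mu> \<cdot>\<^sub>v (P *\<^sub>v x)" .
  have "P *\<^sub>v x \<noteq> 0\<^sub>v n" using inj x by blast
  thus ?thesis using ev inW[OF x(1)] by blast
qed


lemma subsp_eig:
  fixes F :: "complex mat"
  assumes W: "subsp n W" and F: "F \<in> carrier_mat n n"
  shows "subsp n {w\<in>W. F *\<^sub>v w = c \<cdot>\<^sub>v w}"
  unfolding subsp_def
proof (intro conjI ballI allI)
  have WC: "W \<subseteq> carrier_vec n" using W unfolding subsp_def by blast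
  show "{w \<in> W. F *\<^sub>v w = c \<cdot>\<^sub>v w} \<subseteq> carrier_vec n" using WC by blast
  show "0\<^sub>v n \<in> {w \<in> W. F *\<^sub>v w = c \<cdot>\<^sub>v w}" using W F unfolding subsp_def by auto
  fix v w assume v: "v \<in> {w \<in> W. F *\<^sub>v w = c \<cdot>\<^sub>v w}" and w: "w \<in> {w \<in> W. F *\<^sub>v w = c \<cdot>\<^sub>v w}"
  have vC: "v \<in> carrier_vec n" and wC: "w \<in> carrier_vec n" using v w WC by auto
  have "F *\<^sub>v (v + w) = F *\<^sub>v v + F *\<^sub>v w" using mult_add_distrib_mat_vec[OF F vC wC] .
  also have "\<dots> = c \<cdot>\<^sub>v (v + w)" using v w vC wC by (simp add: smult_add_distrib_vec)
  finally show "v + w \<in> {w \<in> W. F *\<^sub>v w = c \<cdot>\<^sub>v w}" using v w W unfolding subsp_def by auto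
next
  have WC: "W \<subseteq> carrier_vec n" using W unfolding subsp_def by blast
  fix a v assume v: "v \<in> {w \<in> W. F *\<^sub>v w = c \<cdot>\<^sub>v w}"
  have vC: "v \<in> carrier_vec n" using v WC by auto
  have "F *\<^sub>v (a \<cdot>\<^sub>v v) = a \<cdot>\<^sub>v (F *\<^sub>v v)" using mult_mat_vec[OF F vC] .
  also have "\<dots> = c \<cdot>\<^sub>v (a \<cdot>\<^sub>v v)" using v by (simp add: smult_smult_assoc mult.commute)
  finally show "a \<cdot>\<^sub>v v \<in> {w \<in> W. F *\<^sub>v w = c \<cdot>\<^sub>v w}" using v W unfolding subsp_def by auto
qed

lemma EIG:
  fixes Fs :: "complex mat set"
  assumes W: "subsp n W" and ne: "W \<noteq> {0\<^sub>v n}" and Fs: "Fs \<subseteq> carrier_mat n n"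
    and inv: "\<forall>F\<in>Fs. \<forall>w\<in>W. F *\<^sub>v w \<in> W"
    and comm: "\<forall>F\<in>Fs. \<forall>G\<in>Fs. \<forall>w\<in>W. F *\<^sub>v (G *\<^sub>v w) = G *\<^sub>v (F *\<^sub>v w)"
  shows "\<exists>w\<in>W. w \<noteq> 0\<^sub>v n \<and> (\<forall>F\<in>Fs. \<exists>c. F *\<^sub>v w = c \<cdot>\<^sub>v w)"
proof -
  interpret V: vec_space "TYPE(complex)" n .
  have main: "\<And>W. subsp n W \<Longrightarrow> W \<noteq> {0\<^sub>v n} \<Longrightarrow> (\<forall>F\<in>Fs. \<forall>w\<in>W. F *\<^sub>v w \<in> W) \<Longrightarrow>
     (\<forall>F\<in>Fs. \<forall>G\<in>Fs. \<forall>w\<in>W. F *\<^sub>v (G *\<^sub>v w) = G *\<^sub>v (F *\<^sub>v w)) \<Longrightarrow> V.mu W = m \<Longrightarrow>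
     \<exists>w\<in>W. w \<noteq> 0\<^sub>v n \<and> (\<forall>F\<in>Fs. \<exists>c. F *\<^sub>v w = c \<cdot>\<^sub>v w)" for m
  proof (induction m rule: less_induct)
    case (less m W)
    have W0: "0\<^sub>v n \<in> W" using less.prems(1) unfolding subsp_def by blast
    show ?case
    proof (cases "\<forall>F\<in>Fs. \<exists>c. \<forall>w\<in>W. F *\<^sub>v w = c \<cdot>\<^sub>v w")
      case True
      obtain w where "w \<in> W" "w \<noteq> 0\<^sub>v n" using less.prems(2) W0 by blast
      thus ?thesis using True by blast
    next
      case False
      then obtain F where F: "F \<in> Fs" and nsc: "\<not> (\<exists>c. \<forall>w\<in>W. F *\<^sub>v w = c \<cdot>\<^sub>v w)" by blast
      have Fc: "F \<in> carrier_mat n n" using F Fs by blast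
      obtain w0 c where w0: "w0 \<in> W" "w0 \<noteq> 0\<^sub>v n" "F *\<^sub>v w0 = c \<cdot>\<^sub>v w0"
        using EIS[OF less.prems(1) less.prems(2) Fc] less.prems(3) F by blast
      define W' where "W' = {w\<in>W. F *\<^sub>v w = c \<cdot>\<^sub>v w}"
      have W': "subsp n W'" unfolding W'_def by (rule subsp_eig[OF less.prems(1) Fc])
      have ne': "W' \<noteq> {0\<^sub>v n}" using w0 unfolding W'_def by blast
      have sub: "W' \<subseteq> W" unfolding W'_def by blast
      have neq: "W' \<noteq> W" using nsc unfolding W'_def by blast
      have WC: "W \<subseteq> carrier_vec n" using less.prems(1) unfolding subsp_def by blast
      have inv': "\<forall>G\<in>Fs. \<forall>w\<in>W'. G *\<^sub>v w \<in> W'"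
      proof (intro ballI)
        fix G w assume G: "G \<in> Fs" and w: "w \<in> W'"
        have Gc: "G \<in> carrier_mat n n" using G Fs by blast
        have wW: "w \<in> W" and wC: "w \<in> carrier_vec n" using w sub WC by auto
        have "F *\<^sub>v (G *\<^sub>v w) = G *\<^sub>v (F *\<^sub>v w)" using less.prems(4) F G wW by blast
        also have "\<dots> = G *\<^sub>v (c \<cdot>\<^sub>v w)" using w unfolding W'_def by simp
        also have "\<dots> = c \<cdot>\<^sub>v (G *\<^sub>v w)" using mult_mat_vec[OF Gc wC] .
        finally show "G *\<^sub>v w \<in> W'" unfolding W'_def using less.prems(3) G wW by blast
      qed
      have comm': "\<forall>F\<in>Fs. \<forall>G\<in>Fs. \<forall>w\<in>W'. F *\<^sub>v (G *\<^sub>v w) = G *\<^sub>v (F *\<^sub>v w)"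
        using less.prems(4) sub by blast
      have lt: "V.mu W' < m" using V.mu_less[OF less.prems(1) W' sub neq] less.prems(5) by simp
      from less.IH[OF lt W' ne' inv' comm' refl] show ?thesis using sub by blast
    qed
  qed
  show ?thesis using main[OF W ne inv comm refl] .
qed

definition idx :: "nat \<Rightarrow> nat \<Rightarrow> int \<Rightarrow> nat" where
  "idx k j m = nat ((int j + m) mod int k)"

definition mnm :: "nat \<Rightarrow> int \<Rightarrow> (nat \<Rightarrow> complex) \<Rightarrow> complex mat" where
  "mnm k n f = mat k k (\<lambda>(i,j). if i = idx k j n then f j else 0)"

lemma idx_lt: "k > 0 \<Longrightarrow> idx k j m < k"
  unfolding idx_def by (simp add: nat_less_iff)

lemma idx_idx: "k > 0 \<Longrightarrow> idx k (idx k j m) n = idx k j (m + n)"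
  unfolding idx_def by (simp add: mod_add_left_eq add.assoc)

lemma idx0: "j < k \<Longrightarrow> idx k j 0 = j"
  unfolding idx_def by simp

lemma idx_inv: "k > 0 \<Longrightarrow> i < k \<Longrightarrow> j < k \<Longrightarrow> (j = idx k i n) \<longleftrightarrow> (i = idx k j (- n))"
proof
  assume k: "k > 0" and i: "i < k" and j: "j < k"
  { assume "j = idx k i n"
    hence "idx k j (-n) = idx k i (n + - n)" using idx_idx[OF k] by simp
    thus "i = idx k j (- n)" using idx0[OF i] by simp }
  { assume "i = idx k j (-n)"
    hence "idx k i n = idx k j (- n + n)" using idx_idx[OF k] by simp
    thus "j = idx k i n" using idx0[OF j] by simp }
qed

lemma mnm_carrier[simp]: "mnm k n f \<in> carrier_mat k k"
  unfolding mnm_def by simp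

lemma mnm_dim[simp]: "dim_row (mnm k n f) = k" "dim_col (mnm k n f) = k"
  unfolding mnm_def by simp_all

lemma mnm_index: "i < k \<Longrightarrow> j < k \<Longrightarrow> mnm k n f $$ (i,j) = (if i = idx k j n then f j else 0)"
  unfolding mnm_def by simp

lemma mnm_cong: "(\<And>j. j < k \<Longrightarrow> f j = g j) \<Longrightarrow> mnm k n f = mnm k n g"
  unfolding mnm_def by (intro eq_matI) auto

lemma mnm_mult:
  assumes k: "k > 0"
  shows "mnm k n f * mnm k m g = mnm k (n + m) (\<lambda>j. f (idx k j m) * g j)"
proof (rule eq_matI)
  fix i j assume i: "i < dim_row (mnm k (n + m) (\<lambda>j. f (idx k j m) * g j))"
    and j: "j < dim_col (mnm k (n + m) (\<lambda>j. f (idx k j m) * g j))"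
  hence i: "i < k" and j: "j < k" by auto
  have "(mnm k n f * mnm k m g) $$ (i,j) = (\<Sum>l\<in>{0..<k}. mnm k n f $$ (i,l) * mnm k m g $$ (l,j))"
    using i j by (simp add: scalar_prod_def)
  also have "\<dots> = (\<Sum>l\<in>{0..<k}. if l = idx k j m then (if i = idx k l n then f l else 0) * g j else 0)"
    using i j by (intro sum.cong) (auto simp: mnm_index)
  also have "\<dots> = (if i = idx k (idx k j m) n then f (idx k j m) else 0) * g j"
    using idx_lt[OF k] by (simp add: sum.delta')
  also have "\<dots> = mnm k (n + m) (\<lambda>j. f (idx k j m) * g j) $$ (i,j)"
    using i j idx_idx[OF k] by (simp add: mnm_index add.commute)
  finally show "(mnm k n f * mnm k m g) $$ (i,j) = mnm k (n + m) (\<lambda>j. f (idx k j m) * g j) $$ (i,j)" .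
qed auto

lemma mnm_smult: "c \<cdot>\<^sub>m mnm k n f = mnm k n (\<lambda>j. c * f j)"
  unfolding mnm_def by (intro eq_matI) auto

lemma mnm_one: "mnm k 0 (\<lambda>_. 1) = 1\<^sub>m k"
  unfolding mnm_def by (intro eq_matI) (auto simp: idx0)

lemma mnm_ctrans:
  assumes k: "k > 0"
  shows "ctrans (mnm k n f) = mnm k (- n) (\<lambda>j. cnj (f (idx k j (- n))))"
proof (rule eq_matI)
  fix i j assume "i < dim_row (mnm k (- n) (\<lambda>j. cnj (f (idx k j (- n)))))"
    "j < dim_col (mnm k (- n) (\<lambda>j. cnj (f (idx k j (- n)))))"
  hence i: "i < k" and j: "j < k" by auto
  have "ctrans (mnm k n f) $$ (i,j) = cnj (mnm k n f $$ (j,i))"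
    unfolding ctrans_def using i j by simp
  also have "\<dots> = (if j = idx k i n then cnj (f i) else 0)" using i j by (simp add: mnm_index)
  also have "\<dots> = (if i = idx k j (-n) then cnj (f (idx k j (- n))) else 0)"
    using idx_inv[OF k i j] by auto
  also have "\<dots> = mnm k (- n) (\<lambda>j. cnj (f (idx k j (- n)))) $$ (i,j)" using i j by (simp add: mnm_index)
  finally show "ctrans (mnm k n f) $$ (i,j) = mnm k (- n) (\<lambda>j. cnj (f (idx k j (- n)))) $$ (i,j)" .
qed (auto simp: ctrans_def)

lemma mnm_unitary:
  assumes k: "k > 0" and f: "\<And>j. cmod (f j) = 1"
  shows "unitary_mat k (mnm k n f)"
proof -
  have ff: "x * cnj x = 1" if "cmod x = 1" for x :: complex
  proof -
    have "x * cnj x = complex_of_real ((cmod x)^2)" by (rule complex_norm_square[symmetric])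
    thus ?thesis using that by simp
  qed
  have ff': "cnj x * x = 1" if "cmod x = 1" for x :: complex using ff[OF that] by (simp add: mult.commute)
  have "mnm k n f * ctrans (mnm k n f) = mnm k 0 (\<lambda>_. 1)"
    unfolding mnm_ctrans[OF k] mnm_mult[OF k] add.right_inverse using ff[OF f] by (intro mnm_cong) auto
  moreover have "ctrans (mnm k n f) * mnm k n f = mnm k 0 (\<lambda>_. 1)"
    unfolding mnm_ctrans[OF k] mnm_mult[OF k] add.left_inverse
    using ff'[OF f] idx_idx[OF k] idx0 by (intro mnm_cong) auto
  ultimately show ?thesis unfolding unitary_mat_def mnm_one by simp
qed

lemma cyc_mnm: "k > 0 \<Longrightarrow> cyc_mat k = mnm k 1 (\<lambda>_. 1)"
  unfolding cyc_mat_def mnm_def idx_def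
  by (intro eq_matI) (auto simp: nat_mod_as_int of_nat_Suc add.commute)

lemma mnm_pow: "k > 0 \<Longrightarrow> mnm k a (\<lambda>_. 1) ^\<^sub>m m = mnm k (a * int m) (\<lambda>_. 1)"
proof (induction m)
  case 0 thus ?case by (simp add: mnm_one)
next
  case (Suc m)
  have "mnm k a (\<lambda>_. 1) ^\<^sub>m Suc m = mnm k (a * int m) (\<lambda>_. 1) * mnm k a (\<lambda>_. 1)"
    using Suc by simp
  also have "\<dots> = mnm k (a * int m + a) (\<lambda>_. 1)" using mnm_mult[OF Suc.prems] by (simp only: mult_1_left)
  also have "a * int m + a = a * int (Suc m)" by (simp add: algebra_simps)
  finally show ?case .
qed

lemma mat_inv_mnm: assumes k: "k > 0"
  shows "mat_inv k (mnm k a (\<lambda>_. 1)) = mnm k (- a) (\<lambda>_. 1)"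
  unfolding mat_inv_def
proof (rule the_equality)
  show "mnm k (- a) (\<lambda>_. 1) \<in> carrier_mat k k \<and> mnm k a (\<lambda>_. 1) * mnm k (- a) (\<lambda>_. 1) = 1\<^sub>m k \<and>
        mnm k (- a) (\<lambda>_. 1) * mnm k a (\<lambda>_. 1) = 1\<^sub>m k"
    using k by (simp add: mnm_mult mnm_one)
  fix B assume B: "B \<in> carrier_mat k k \<and> mnm k a (\<lambda>_. 1) * B = 1\<^sub>m k \<and> B * mnm k a (\<lambda>_. 1) = 1\<^sub>m k"
  have Bc: "B \<in> carrier_mat k k" using B by blast
  have "B = (mnm k (- a) (\<lambda>_. 1) * mnm k a (\<lambda>_. 1)) * B"
    using k left_mult_one_mat[OF Bc] by (simp only: mnm_mult mnm_one add.left_inverse mult_1_left)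
  also have "\<dots> = mnm k (- a) (\<lambda>_. 1) * (mnm k a (\<lambda>_. 1) * B)" using B by (intro assoc_mult_mat) auto
  also have "\<dots> = mnm k (- a) (\<lambda>_. 1)" using B by simp
  finally show "B = mnm k (- a) (\<lambda>_. 1)" .
qed

lemma ipow_cyc: assumes k: "k > 0" shows "mat_ipow k (cyc_mat k) n = mnm k n (\<lambda>_. 1)"
  unfolding mat_ipow_def cyc_mnm[OF k] using k by (simp add: mnm_pow mat_inv_mnm)

lemma diag_mnm: "mat k k (\<lambda>(i, j). if i = j then f i else 0) = mnm k 0 f"
  unfolding mnm_def by (intro eq_matI) (auto simp: idx0)

lemma alpha_mnm: assumes k: "k > 0"
  shows "alpha T k z \<chi> g = mnm k (fst g) (\<lambda>j. z powi (fst g) * \<chi> ((T ^^ j) (snd g)))"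
  unfolding alpha_def ipow_cyc[OF k] diag_mnm mnm_mult[OF k] mnm_smult
  by (simp only: add_0_right mult_1_left)

lemma idx_one: "k > 0 \<Longrightarrow> idx k i 1 = Suc i mod k"
  unfolding idx_def by (simp add: nat_mod_as_int add.commute)

lemma idx_succ: "k > 0 \<Longrightarrow> Suc (idx k j m) mod k = idx k j (m + 1)"
  using idx_idx[of k j m 1] idx_one[of k "idx k j m"] by simp

lemma chi0: assumes "character \<chi>" shows "\<chi> 0 = 1"
proof -
  have "\<chi> 0 = \<chi> 0 * \<chi> 0" using assms unfolding character_def by (metis add_0)
  moreover have "\<chi> 0 \<noteq> 0" using assms unfolding character_def by (metis norm_zero zero_neq_one)
  ultimately show ?thesis by (metis mult_cancel_left1)
qed

lemma chi_nz: "character \<chi> \<Longrightarrow> \<chi> a \<noteq> 0"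
  unfolding character_def by (metis norm_zero zero_neq_one)

lemma chi_add: "character \<chi> \<Longrightarrow> \<chi> (a + b) = \<chi> a * \<chi> b"
  unfolding character_def by blast

lemma chi_norm: "character \<chi> \<Longrightarrow> cmod (\<chi> a) = 1"
  unfolding character_def by blast

lemma chi_diff: assumes "character \<chi>" shows "\<chi> (a - b) = \<chi> a / \<chi> b"
proof -
  have "\<chi> a = \<chi> (a - b) * \<chi> b" using chi_add[OF assms, of "a - b" b] by simp
  thus ?thesis using chi_nz[OF assms, of b] by (simp add: field_simps)
qed

lemma factors_iff: assumes "character \<chi>"
  shows "factors_through T l \<chi> \<longleftrightarrow> (\<forall>h. \<chi> ((T ^^ l) h) = \<chi> h)"
  unfolding factors_through_def chi_diff[OF assms] using chi_nz[OF assms] by (simp add: divide_eq_1_iff)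

context
  fixes T :: "'h::ab_group_add \<Rightarrow> 'h"
  assumes lm: "lambda_module T"
begin

lemma T_bij: "bij T" using lm unfolding lambda_module_def by blast
lemma T_add: "T (a + b) = T a + T b" using lm unfolding lambda_module_def by blast
lemma T_0: "T 0 = 0" using T_add[of 0 0] by simp
lemma T_Ti: "T (inv_into UNIV T x) = x" using T_bij by (simp add: bij_def surj_f_inv_f)
lemma Ti_T: "inv_into UNIV T (T x) = x" using T_bij by (simp add: bij_def inv_into_f_f)
lemma Ti_0: "inv_into UNIV T 0 = 0" using Ti_T[of 0] T_0 by simp

lemma Tpow_add: "(T ^^ j) (a + b) = (T ^^ j) a + (T ^^ j) b"
  by (induction j) (auto simp: T_add)

lemma Tpow_0: "(T ^^ j) 0 = 0"
  by (induction j) (auto simp: T_0)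

lemma Tpow_surj: "\<exists>x. (T ^^ j) x = h"
proof (induction j arbitrary: h)
  case (Suc j)
  obtain x where "(T ^^ j) x = inv_into UNIV T h" using Suc by blast
  hence "(T ^^ Suc j) x = h" using T_Ti by simp
  thus ?case by blast
qed auto

lemma Tipow_0: "(inv_into UNIV T ^^ j) 0 = 0"
  by (induction j) (auto simp: Ti_0)

lemma tpow_zero[simp]: "tpow T m 0 = 0"
  unfolding tpow_def by (simp add: Tpow_0 Tipow_0)

lemma tpow_0[simp]: "tpow T 0 x = x" unfolding tpow_def by simp
lemma tpow_1[simp]: "tpow T 1 x = T x" unfolding tpow_def by simp
lemma tpow_m1[simp]: "tpow T (-1) x = inv_into UNIV T x" unfolding tpow_def by simp
lemma tpow_nat: "tpow T (int j) x = (T ^^ j) x" unfolding tpow_def by simp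

lemma tpow_right: "tpow T (m + 1) x = tpow T m (T x)"
proof (cases "m \<ge> 0")
  case True
  hence "nat (m + 1) = Suc (nat m)" by simp
  thus ?thesis unfolding tpow_def using True by (simp add: funpow_Suc_right del: funpow.simps)
next
  case False
  hence m: "nat (- m) = Suc (nat (- (m + 1)))" by simp
  show ?thesis unfolding tpow_def using False m by (simp add: funpow_Suc_right Ti_T del: funpow.simps)
qed

lemma chi_period: assumes "character \<chi>" "factors_through T k \<chi>"
  shows "\<chi> ((T ^^ j) x) = \<chi> ((T ^^ (j mod k)) x)"
proof (induction j rule: less_induct)
  case (less j)
  show ?case
  proof (cases "j < k")
    case True thus ?thesis by simp
  next
    case False
    hence "j = (j - k) + k" by simp
    hence "(T ^^ j) x = (T ^^ k) ((T ^^ (j - k)) x)" by (metis funpow_add comp_apply add.commute)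
    hence "\<chi> ((T ^^ j) x) = \<chi> ((T ^^ (j - k)) x)" using assms factors_iff by metis
    also have "\<dots> = \<chi> ((T ^^ ((j - k) mod k)) x)"
    proof (cases "k = 0")
      case True thus ?thesis by simp
    next
      case False thus ?thesis using less.IH[of "j - k"] \<open>\<not> j < k\<close> by simp
    qed
    also have "(j - k) mod k = j mod k" using \<open>\<not> j < k\<close> by (simp add: mod_if)
    finally show ?thesis .
  qed
qed

lemma chi_tpow: assumes chi: "character \<chi>" "factors_through T k \<chi>" and k: "k > 0"
  shows "\<chi> ((T ^^ j) (tpow T m h)) = \<chi> ((T ^^ (idx k j m)) h)"
proof (induction m arbitrary: j h rule: int_induct[where k = 0])
  case base
  have "idx k j 0 = j mod k" unfolding idx_def by (simp add: nat_mod_as_int)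
  thus ?case using chi_period[OF chi] by simp
next
  case (step1 m)
  have "\<chi> ((T ^^ j) (tpow T (m + 1) h)) = \<chi> ((T ^^ idx k j m) (T h))"
    unfolding tpow_right using step1.IH .
  also have "\<dots> = \<chi> ((T ^^ Suc (idx k j m)) h)" by (simp add: funpow_Suc_right del: funpow.simps)
  also have "\<dots> = \<chi> ((T ^^ idx k j (m + 1)) h)" using chi_period[OF chi] idx_succ[OF k] by metis
  finally show ?case .
next
  case (step2 m)
  define r where "r = idx k j (m - 1)"
  have r: "idx k j m = Suc r mod k" using idx_succ[OF k, of j "m - 1"] r_def by simp
  have "tpow T (m - 1) h = tpow T m (inv_into UNIV T h)"
    using tpow_right[of "m - 1" "inv_into UNIV T h"] T_Ti by simp
  hence "\<chi> ((T ^^ j) (tpow T (m - 1) h)) = \<chi> ((T ^^ (Suc r mod k)) (inv_into UNIV T h))"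
    using step2.IH r by simp
  also have "\<dots> = \<chi> ((T ^^ Suc r) (inv_into UNIV T h))" using chi_period[OF chi] by metis
  also have "\<dots> = \<chi> ((T ^^ r) h)" by (simp add: funpow_Suc_right T_Ti del: funpow.simps)
  finally show ?case unfolding r_def .
qed

lemma alpha_hom: assumes chi: "character \<chi>" "factors_through T k \<chi>" and k: "k > 0" and z: "cmod z = 1"
  shows "alpha T k z \<chi> (sd_mult T g g') = alpha T k z \<chi> g * alpha T k z \<chi> g'"
proof -
  obtain n h where g: "g = (n, h)" by (cases g)
  obtain m h' where g': "g' = (m, h')" by (cases g')
  have z0: "z \<noteq> 0" using z by auto
  show ?thesis
    unfolding g g' sd_mult_def alpha_mnm[OF k] mnm_mult[OF k] fst_conv snd_conv
  proof (intro mnm_cong)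
    fix j assume j: "j < k"
    have "z powi (n + m) * \<chi> ((T ^^ j) (tpow T m h + h')) =
          z powi n * z powi m * (\<chi> ((T ^^ j) (tpow T m h)) * \<chi> ((T ^^ j) h'))"
      using power_int_add[of z n m] z0 by (simp add: Tpow_add chi_add[OF chi(1)])
    also have "\<dots> = z powi n * \<chi> ((T ^^ idx k j m) h) * (z powi m * \<chi> ((T ^^ j) h'))"
      using chi_tpow[OF chi k] by (simp add: ac_simps)
    finally show "z powi (n + m) * \<chi> ((T ^^ j) (tpow T m h + h')) =
          z powi n * \<chi> ((T ^^ idx k j m) h) * (z powi m * \<chi> ((T ^^ j) h'))" .
  qed
qed

lemma alpha_unitary: assumes chi: "character \<chi>" and k: "k > 0" and z: "cmod z = 1"
  shows "unitary_mat k (alpha T k z \<chi> g)"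
  unfolding alpha_mnm[OF k]
  by (rule mnm_unitary[OF k]) (simp add: norm_mult norm_power_int z chi_norm[OF chi])

lemma part1: assumes k: "k > 0"
  shows "\<forall>z \<chi>. cmod z = 1 \<and> character \<chi> \<and> factors_through T k \<chi> \<longrightarrow> unitary_rep T k (alpha T k z \<chi>)"
  unfolding unitary_rep_def using alpha_hom alpha_unitary k by blast

end

lemma mnm_vec0: assumes v: "v \<in> carrier_vec k"
  shows "mnm k 0 f *\<^sub>v v = vec k (\<lambda>i. f i * v $ i)"
proof (rule eq_vecI)
  fix i assume "i < dim_vec (vec k (\<lambda>i. f i * v $ i))"
  hence i: "i < k" by simp
  have "(mnm k 0 f *\<^sub>v v) $ i = (\<Sum>l\<in>{0..<k}. mnm k 0 f $$ (i, l) * v $ l)"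
    using i v by (simp add: scalar_prod_def)
  also have "\<dots> = (\<Sum>l\<in>{0..<k}. if l = i then f i * v $ i else 0)"
    using i by (intro sum.cong) (auto simp: mnm_index idx0)
  also have "\<dots> = f i * v $ i" using i by simp
  finally show "(mnm k 0 f *\<^sub>v v) $ i = vec k (\<lambda>i. f i * v $ i) $ i" using i by simp
qed (insert v, auto)

lemma mnm_unit: assumes k: "k > 0" and j: "j < k"
  shows "mnm k n f *\<^sub>v unit_vec k j = f j \<cdot>\<^sub>v unit_vec k (idx k j n)"
proof (rule eq_vecI)
  fix i assume "i < dim_vec (f j \<cdot>\<^sub>v unit_vec k (idx k j n))"
  hence i: "i < k" by simp
  have "(mnm k n f *\<^sub>v unit_vec k j) $ i = (\<Sum>l\<in>{0..<k}. mnm k n f $$ (i, l) * unit_vec k j $ l)"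
    using i by (simp add: scalar_prod_def)
  also have "\<dots> = (\<Sum>l\<in>{0..<k}. if l = j then (if i = idx k j n then f j else 0) else 0)"
    using i j by (intro sum.cong) (auto simp: mnm_index)
  also have "\<dots> = (if i = idx k j n then f j else 0)" using j by simp
  finally show "(mnm k n f *\<^sub>v unit_vec k j) $ i = (f j \<cdot>\<^sub>v unit_vec k (idx k j n)) $ i"
    using i idx_lt[OF k] by simp
qed auto

context
  fixes T :: "'h::ab_group_add \<Rightarrow> 'h"
  assumes lm: "lambda_module T"
begin

lemma chars_distinct: assumes chi: "character \<chi>"
  and nf: "\<forall>l. 1 \<le> l \<and> l < k \<longrightarrow> \<not> factors_through T l \<chi>"
  and ij: "i < j" "j < k"
  shows "\<exists>h. \<chi> ((T ^^ i) h) \<noteq> \<chi> ((T ^^ j) h)"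
proof (rule ccontr)
  assume "\<not> ?thesis"
  hence eq: "\<And>h. \<chi> ((T ^^ i) h) = \<chi> ((T ^^ j) h)" by blast
  have "\<chi> ((T ^^ (j - i)) h) = \<chi> h" for h
  proof -
    obtain x where x: "(T ^^ i) x = h" using Tpow_surj[OF lm] by blast
    have "(T ^^ (j - i)) h = (T ^^ j) x" using x ij funpow_add[of "j - i" i T] by (simp add: comp_def)
    thus ?thesis using eq[of x] x by metis
  qed
  hence "factors_through T (j - i) \<chi>" using factors_iff[OF chi] by blast
  moreover have "1 \<le> j - i \<and> j - i < k" using ij by auto
  ultimately show False using nf by blast
qed

lemma part2: assumes k: "k > 0"
  shows "\<forall>z \<chi>. cmod z = 1 \<and> character \<chi> \<and> factors_through T k \<chi> \<and>
            (\<forall>l. 1 \<le> l \<and> l < k \<longrightarrow> \<not> factors_through T l \<chi>) \<longrightarrow>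
            irreducible_rep k (alpha T k z \<chi>)"
proof (intro allI impI)
  fix z \<chi> assume asm: "cmod z = 1 \<and> character \<chi> \<and> factors_through T k \<chi> \<and>
            (\<forall>l. 1 \<le> l \<and> l < k \<longrightarrow> \<not> factors_through T l \<chi>)"
  hence z: "cmod z = 1" and chi: "character \<chi>" and nf: "\<forall>l. 1 \<le> l \<and> l < k \<longrightarrow> \<not> factors_through T l \<chi>"
    by auto
  have z0: "z \<noteq> 0" using z by auto
  let ?a = "alpha T k z \<chi>"
  show "irreducible_rep k ?a" unfolding irreducible_rep_def
  proof (intro allI impI)
    fix W assume inv: "invariant_subspace k ?a W"
    have WC: "W \<subseteq> carrier_vec k" and W0: "0\<^sub>v k \<in> W" and Wadd: "\<And>v w. v \<in> W \<Longrightarrow> w \<in> W \<Longrightarrow> v + w \<in> W"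
      and Wsm: "\<And>c v. v \<in> W \<Longrightarrow> c \<cdot>\<^sub>v v \<in> W" and Wa: "\<And>g v. v \<in> W \<Longrightarrow> ?a g *\<^sub>v v \<in> W"
      using inv unfolding invariant_subspace_def by auto
    have a0: "?a (0, h) *\<^sub>v v = vec k (\<lambda>i. \<chi> ((T ^^ i) h) * v $ i)" if "v \<in> carrier_vec k" for h v
      unfolding alpha_mnm[OF k] using mnm_vec0[OF that] by simp
    have a1: "?a (1, 0) *\<^sub>v unit_vec k j = z \<cdot>\<^sub>v unit_vec k (Suc j mod k)" if "j < k" for j
      unfolding alpha_mnm[OF k] using mnm_unit[OF k that] idx_one[OF k]
      by (simp add: Tpow_0[OF lm] chi0[OF chi])
    show "W = {0\<^sub>v k} \<or> W = carrier_vec k"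
    proof (cases "W = {0\<^sub>v k}")
      case True thus ?thesis by blast
    next
      case False
      define supp where "supp = (\<lambda>v :: complex vec. {i. i < k \<and> v $ i \<noteq> 0})"
      have fs: "finite (supp v)" for v unfolding supp_def by simp
      obtain w0 where "w0 \<in> W" "w0 \<noteq> 0\<^sub>v k" using False W0 by blast
      then obtain w where w: "w \<in> W" "w \<noteq> 0\<^sub>v k"
        and wmin: "\<And>w'. w' \<in> W \<and> w' \<noteq> 0\<^sub>v k \<Longrightarrow> card (supp w) \<le> card (supp w')"
        using ex_has_least_nat[of "\<lambda>w. w \<in> W \<and> w \<noteq> 0\<^sub>v k" w0 "\<lambda>w. card (supp w)"] by blast
      have wC: "w \<in> carrier_vec k" using w WC by auto
      obtain i where i: "i < k" "w $ i \<noteq> 0"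
      proof (rule ccontr)
        assume "\<not> thesis"
        hence "\<forall>i<k. w $ i = 0" using that by blast
        hence "w = 0\<^sub>v k" using wC by (intro eq_vecI) auto
        thus False using w by simp
      qed
      have single: "\<forall>j<k. j \<noteq> i \<longrightarrow> w $ j = 0"
      proof (intro allI impI, rule ccontr)
        fix j assume j: "j < k" "j \<noteq> i" "w $ j \<noteq> 0"
        obtain h where h: "\<chi> ((T ^^ i) h) \<noteq> \<chi> ((T ^^ j) h)"
        proof (cases "i < j")
          case True thus ?thesis using chars_distinct[OF chi nf True j(1)] that by blast
        next
          case False hence "j < i" using j by simp
          thus ?thesis using chars_distinct[OF chi nf _ i(1)] that by metis
        qed
        define u where "u = ?a (0, h) *\<^sub>v w + (- \<chi> ((T ^^ j) h)) \<cdot>\<^sub>v w"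
        have uW: "u \<in> W" unfolding u_def using w by (intro Wadd Wsm Wa)
        have ui: "u $ l = (\<chi> ((T ^^ l) h) - \<chi> ((T ^^ j) h)) * w $ l" if "l < k" for l
          unfolding u_def a0[OF wC] using that wC by (simp add: algebra_simps)
        have sub: "supp u \<subseteq> supp w - {j}" unfolding supp_def using ui by auto
        have iu: "i \<in> supp u" unfolding supp_def using ui[OF i(1)] i h by auto
        have "u \<noteq> 0\<^sub>v k" using iu unfolding supp_def by auto
        hence "card (supp w) \<le> card (supp u)" using wmin uW by blast
        moreover have "card (supp u) < card (supp w)"
        proof -
          have "supp u \<subset> supp w" using sub j unfolding supp_def by auto
          thus ?thesis using fs psubset_card_mono by blast
        qed
        ultimately show False by simp
      qed
      have wi: "w = w $ i \<cdot>\<^sub>v unit_vec k i" using single i wC by (intro eq_vecI) auto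
      have "(1 / w $ i) \<cdot>\<^sub>v (w $ i \<cdot>\<^sub>v unit_vec k i) = unit_vec k i" using i by (simp add: smult_smult_assoc)
      hence "unit_vec k i = (1 / w $ i) \<cdot>\<^sub>v w" using wi by simp
      hence ei: "unit_vec k i \<in> W" using Wsm w by simp
      have step: "unit_vec k (Suc p mod k) \<in> W" if "p < k" "unit_vec k p \<in> W" for p
      proof -
        have "unit_vec k (Suc p mod k) = (1 / z) \<cdot>\<^sub>v (?a (1, 0) *\<^sub>v unit_vec k p)"
          using a1[OF that(1)] z0 by (simp add: smult_smult_assoc)
        thus ?thesis using Wsm Wa that(2) by simp
      qed
      have allm: "unit_vec k ((i + m) mod k) \<in> W" for m
      proof (induction m)
        case 0 thus ?case using ei i by simp
      next
        case (Suc m)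
        have "unit_vec k (Suc ((i + m) mod k) mod k) \<in> W" using step[OF _ Suc] k by simp
        thus ?case by (simp add: mod_Suc_eq)
      qed
      have allj: "unit_vec k j \<in> W" if "j < k" for j
      proof -
        have "(i + (j + k - i)) mod k = j" using i that by simp
        thus ?thesis using allm[of "j + k - i"] by simp
      qed
      have partial: "vec k (\<lambda>l. if l < m then v $ l else 0) \<in> W" if "v \<in> carrier_vec k" for v m
      proof (induction m)
        case 0
        have "vec k (\<lambda>l. if l < 0 then v $ l else 0) = 0\<^sub>v k" by (intro eq_vecI) auto
        thus ?case using W0 by simp
      next
        case (Suc m)
        show ?case
        proof (cases "m < k")
          case True
          have "vec k (\<lambda>l. if l < Suc m then v $ l else 0) =
                vec k (\<lambda>l. if l < m then v $ l else 0) + v $ m \<cdot>\<^sub>v unit_vec k m"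
            using True by (intro eq_vecI) (auto simp: less_Suc_eq)
          thus ?thesis using Wadd[OF Suc Wsm[OF allj[OF True]]] by simp
        next
          case False
          have "vec k (\<lambda>l. if l < Suc m then v $ l else 0) = vec k (\<lambda>l. if l < m then v $ l else 0)"
            using False by (intro eq_vecI) auto
          thus ?thesis using Suc by simp
        qed
      qed
      have "carrier_vec k \<subseteq> W"
      proof
        fix v :: "complex vec" assume v: "v \<in> carrier_vec k"
        have "vec k (\<lambda>l. if l < k then v $ l else 0) = v" using v by (intro eq_vecI) auto
        thus "v \<in> W" using partial[OF v, of k] by simp
      qed
      thus ?thesis using WC by blast
    qed
  qed
qed

end

definition ip :: "nat \<Rightarrow> complex vec \<Rightarrow> complex vec \<Rightarrow> complex" where
  "ip k v w = (\<Sum>i<k. v $ i * cnj (w $ i))"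

lemma mv_index: "A \<in> carrier_mat k k \<Longrightarrow> v \<in> carrier_vec k \<Longrightarrow> i < k \<Longrightarrow>
   (A *\<^sub>v v) $ i = (\<Sum>a<k. A $$ (i, a) * v $ a)"
  by (simp add: scalar_prod_def atLeast0LessThan)

lemma ip_unitary:
  assumes U: "U \<in> carrier_mat k k" and uu: "ctrans U * U = 1\<^sub>m k"
    and v: "v \<in> carrier_vec k" and w: "w \<in> carrier_vec k"
  shows "ip k (U *\<^sub>v v) (U *\<^sub>v w) = ip k v w"
proof -
  have cu: "(\<Sum>i<k. cnj (U $$ (i, b)) * U $$ (i, a)) = (if b = a then 1 else 0)" if "a < k" "b < k" for a b
  proof -
    have "(ctrans U * U) $$ (b, a) = (\<Sum>i<k. cnj (U $$ (i, b)) * U $$ (i, a))"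
      using U that unfolding ctrans_def by (simp add: scalar_prod_def atLeast0LessThan)
    thus ?thesis using uu that by simp
  qed
  have "ip k (U *\<^sub>v v) (U *\<^sub>v w) = (\<Sum>i<k. (\<Sum>a<k. U $$ (i, a) * v $ a) * cnj (\<Sum>b<k. U $$ (i, b) * w $ b))"
    unfolding ip_def using U v w by (intro sum.cong refl) (auto simp del: index_mult_mat_vec simp add: mv_index[OF U v] mv_index[OF U w])
  also have "\<dots> = (\<Sum>i<k. \<Sum>b<k. \<Sum>a<k. v $ a * (cnj (w $ b) * (U $$ (i, a) * cnj (U $$ (i, b)))))"
    by (simp add: sum_distrib_left sum_distrib_right ac_simps)
  also have "\<dots> = (\<Sum>b<k. \<Sum>i<k. \<Sum>a<k. v $ a * (cnj (w $ b) * (U $$ (i, a) * cnj (U $$ (i, b)))))"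
    by (rule sum.swap)
  also have "\<dots> = (\<Sum>b<k. \<Sum>a<k. \<Sum>i<k. v $ a * (cnj (w $ b) * (U $$ (i, a) * cnj (U $$ (i, b)))))"
    by (rule sum.cong[OF refl], rule sum.swap)
  also have "\<dots> = (\<Sum>b<k. \<Sum>a<k. if a = b then v $ a * cnj (w $ b) else 0)"
  proof (intro sum.cong refl)
    fix a b assume "b \<in> {..<k}" "a \<in> {..<k}"
    hence ab: "a < k" "b < k" by auto
    have "(\<Sum>i<k. v $ a * (cnj (w $ b) * (U $$ (i, a) * cnj (U $$ (i, b))))) =
          v $ a * cnj (w $ b) * (\<Sum>i<k. cnj (U $$ (i, b)) * U $$ (i, a))"
      by (simp add: sum_distrib_left ac_simps)
    also have "\<dots> = (if a = b then v $ a * cnj (w $ b) else 0)" using cu[OF ab] by auto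
    finally show "(\<Sum>i<k. v $ a * (cnj (w $ b) * (U $$ (i, a) * cnj (U $$ (i, b))))) =
          (if a = b then v $ a * cnj (w $ b) else 0)" .
  qed
  also have "\<dots> = ip k v w" unfolding ip_def by simp
  finally show ?thesis .
qed

lemma ip_self: "ip k v v = complex_of_real (\<Sum>i<k. (cmod (v $ i))^2)"
  unfolding ip_def of_real_sum by (intro sum.cong refl) (rule complex_norm_square[symmetric])

lemma ip_self_nz: assumes v: "v \<in> carrier_vec k" "v \<noteq> 0\<^sub>v k" shows "ip k v v \<noteq> 0"
proof -
  obtain i where i: "i < k" "v $ i \<noteq> 0"
  proof (rule ccontr)
    assume "\<not> thesis"
    hence "\<forall>i<k. v $ i = 0" using that by blast
    hence "v = 0\<^sub>v k" using v by (intro eq_vecI) auto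
    thus False using v by simp
  qed
  have "0 < (cmod (v $ i))^2" using i by simp
  also have "\<dots> \<le> (\<Sum>i<k. (cmod (v $ i))^2)" using i by (intro member_le_sum) auto
  finally have pos: "0 < (\<Sum>i<k. (cmod (v $ i))^2)" .
  show ?thesis unfolding ip_self using pos by (metis of_real_eq_0_iff less_irrefl)
qed

lemma ip_smult_left: "ip k (c \<cdot>\<^sub>v v) w = c * ip k v w" if "v \<in> carrier_vec k"
  unfolding ip_def using that by (simp add: sum_distrib_left ac_simps)

lemma ip_smult_right: "ip k v (c \<cdot>\<^sub>v w) = cnj c * ip k v w" if "w \<in> carrier_vec k"
  unfolding ip_def using that by (simp add: sum_distrib_left ac_simps)

lemma eigen_norm:
  assumes U: "U \<in> carrier_mat k k" and uu: "ctrans U * U = 1\<^sub>m k"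
    and v: "v \<in> carrier_vec k" "v \<noteq> 0\<^sub>v k" and ev: "U *\<^sub>v v = a \<cdot>\<^sub>v v"
  shows "cmod a = 1"
proof -
  have "ip k v v = a * cnj a * ip k v v"
    using ip_unitary[OF U uu v(1) v(1)] ev v by (simp add: ip_smult_left ip_smult_right ac_simps)
  hence "a * cnj a = 1" using ip_self_nz[OF v] by simp
  hence "complex_of_real ((cmod a)^2) = 1" using complex_norm_square by metis
  hence "(cmod a)^2 = 1" by (metis of_real_eq_1_iff)
  thus ?thesis using norm_ge_zero[of a] by (auto simp: power2_eq_1_iff)
qed

lemma eigen_orth:
  assumes U: "U \<in> carrier_mat k k" and uu: "ctrans U * U = 1\<^sub>m k"
    and v: "v \<in> carrier_vec k" and w: "w \<in> carrier_vec k" "w \<noteq> 0\<^sub>v k"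
    and ev: "U *\<^sub>v v = a \<cdot>\<^sub>v v" and ew: "U *\<^sub>v w = b \<cdot>\<^sub>v w" and ab: "a \<noteq> b"
  shows "ip k v w = 0"
proof -
  have b: "cmod b = 1" using eigen_norm[OF U uu w ew] .
  have bb: "b * cnj b = 1" using b complex_norm_square[of b] by simp
  have "ip k v w = a * cnj b * ip k v w"
    using ip_unitary[OF U uu v w(1)] ev ew v w by (simp add: ip_smult_left ip_smult_right ac_simps)
  moreover have "a * cnj b \<noteq> 1"
  proof
    assume "a * cnj b = 1"
    hence "a * cnj b * b = b" by simp
    hence "a = b" using bb by (simp add: ac_simps)
    thus False using ab by simp
  qed
  ultimately have "(a * cnj b - 1) * ip k v w = 0" "a * cnj b - 1 \<noteq> 0" by (simp_all add: algebra_simps)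
  thus ?thesis by simp
qed


lemma orth_bound:
  assumes u: "\<And>j. j < m \<Longrightarrow> u j \<in> carrier_vec k \<and> u j \<noteq> 0\<^sub>v k"
    and orth: "\<And>i j. i < m \<Longrightarrow> j < m \<Longrightarrow> i \<noteq> j \<Longrightarrow> ip k (u i) (u j) = 0"
  shows "m \<le> k"
proof -
  interpret V: vec_space "TYPE(complex)" k .
  let ?A = "u ` {..<m}"
  have AC: "?A \<subseteq> carrier_vec k" using u by auto
  have inj: "inj_on u {..<m}"
  proof (rule inj_onI, rule ccontr)
    fix i j assume ij: "i \<in> {..<m}" "j \<in> {..<m}" "u i = u j" "i \<noteq> j"
    have "ip k (u i) (u i) = 0" using orth[of i j] ij by auto
    thus False using ip_self_nz[of "u i" k] u[of i] ij by auto
  qed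
  have li: "V.lin_indpt ?A"
  proof
    assume "V.lin_dep ?A"
    then obtain A' a v where A': "finite A'" "A' \<subseteq> ?A" "V.lincomb a A' = 0\<^sub>v k" "v \<in> A'" "a v \<noteq> 0"
      unfolding V.lin_dep_def by auto
    have A'C: "A' \<subseteq> carrier_vec k" using A' AC by auto
    obtain jv where jv: "jv < m" "v = u jv" using A'(2,4) by blast
    have vC: "v \<in> carrier_vec k" "v \<noteq> 0\<^sub>v k" using jv u by auto
    have fC: "(\<lambda>x. a x \<cdot>\<^sub>v x) \<in> A' \<rightarrow> carrier_vec k" using A'C by auto
    have lc: "V.lincomb a A' $ i = (\<Sum>x\<in>A'. a x * x $ i)" if "i < k" for i
      unfolding V.lincomb_def V.finsum_index[OF that fC A'C] using A'C that
      by (intro sum.cong) auto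
    have "0 = ip k (V.lincomb a A') v" using A' unfolding ip_def by simp
    also have "\<dots> = (\<Sum>i<k. \<Sum>x\<in>A'. a x * x $ i * cnj (v $ i))"
      unfolding ip_def by (intro sum.cong refl) (simp add: lc sum_distrib_right)
    also have "\<dots> = (\<Sum>x\<in>A'. a x * ip k x v)"
      unfolding ip_def by (subst sum.swap) (simp add: sum_distrib_left ac_simps)
    also have "\<dots> = (\<Sum>x\<in>A'. if x = v then a v * ip k v v else 0)"
    proof (intro sum.cong refl)
      fix x assume x: "x \<in> A'"
      show "a x * ip k x v = (if x = v then a v * ip k v v else 0)"
      proof (cases "x = v")
        case False
        obtain i j where "i < m" "j < m" "x = u i" "v = u j" using x A' by blast
        thus ?thesis using False orth[of i j] by auto
      qed simp
    qed
    also have "\<dots> = a v * ip k v v" using A' by simp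
    finally show False using A'(5) ip_self_nz[OF vC] by simp
  qed
  have "card ?A \<le> k" using V.li_bound[OF AC li] by blast
  thus ?thesis using card_image[OF inj] by simp
qed

lemma smult_cancel_vec: assumes v: "v \<in> carrier_vec k" "v \<noteq> 0\<^sub>v k" and eq: "c \<cdot>\<^sub>v v = d \<cdot>\<^sub>v v"
  shows "c = (d :: complex)"
proof -
  obtain i where i: "i < k" "v $ i \<noteq> 0"
  proof (rule ccontr)
    assume "\<not> thesis"
    hence "\<forall>i<k. v $ i = 0" using that by blast
    hence "v = 0\<^sub>v k" using v by (intro eq_vecI) auto
    thus False using v by simp
  qed
  have "(c \<cdot>\<^sub>v v) $ i = (d \<cdot>\<^sub>v v) $ i" using eq by simp
  thus ?thesis using i v by simp
qed

lemma char_shift: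
  assumes lm: "lambda_module T" and ij: "i \<le> j" and eq: "\<forall>h. \<chi> ((T ^^ i) h) = \<chi> ((T ^^ j) h)"
  shows "\<forall>h. \<chi> ((T ^^ (j - i)) h) = \<chi> h"
proof
  fix h
  obtain x where x: "(T ^^ i) x = h" using Tpow_surj[OF lm] by blast
  have "(T ^^ (j - i)) h = (T ^^ j) x" using x ij funpow_add[of "j - i" i T] by (simp add: comp_def)
  thus "\<chi> ((T ^^ (j - i)) h) = \<chi> h" using eq x by metis
qed

context
  fixes T :: "'h::ab_group_add \<Rightarrow> 'h" and k :: nat and \<rho> :: "int \<times> 'h \<Rightarrow> complex mat"
  assumes lm: "lambda_module T" and k: "k > 0" and rep: "unitary_rep T k \<rho>" and irr: "irreducible_rep k \<rho>"
begin

abbreviation "B \<equiv> \<rho> (1, 0)"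
abbreviation "Bi \<equiv> \<rho> (-1, 0)"

lemma rho_carrier: "\<rho> g \<in> carrier_mat k k"
  using rep unfolding unitary_rep_def unitary_mat_def by blast
lemma rho_uu: "ctrans (\<rho> g) * \<rho> g = 1\<^sub>m k"
  using rep unfolding unitary_rep_def unitary_mat_def by blast
lemma rho_mult: "\<rho> (sd_mult T g g') = \<rho> g * \<rho> g'"
  using rep unfolding unitary_rep_def by blast

lemma ctrans_carrier: "ctrans (\<rho> g) \<in> carrier_mat k k"
  using rho_carrier[of g] unfolding ctrans_def by auto

lemma rho00: "\<rho> (0, 0) = 1\<^sub>m k"
proof -
  have sd: "sd_mult T (0, 0) (0, 0) = (0, 0)" unfolding sd_mult_def by (simp add: tpow_0[OF lm])
  have rr: "\<rho> (0,0) = \<rho> (0,0) * \<rho> (0,0)" using rho_mult[of "(0,0)" "(0,0)"] sd by simp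
  have "1\<^sub>m k = ctrans (\<rho> (0,0)) * (\<rho> (0,0) * \<rho> (0,0))" using rho_uu[of "(0,0)"] rr by simp
  also have "\<dots> = (ctrans (\<rho> (0,0)) * \<rho> (0,0)) * \<rho> (0,0)"
    by (rule assoc_mult_mat[symmetric, OF ctrans_carrier rho_carrier rho_carrier])
  also have "\<dots> = \<rho> (0,0)" using rho_uu[of "(0,0)"] rho_carrier[of "(0,0)"] by simp
  finally show ?thesis by simp
qed

lemma rhoM: "\<rho> (0, h) * \<rho> (0, h') = \<rho> (0, h + h')"
  using rho_mult[of "(0,h)" "(0,h')"] unfolding sd_mult_def by (simp add: tpow_0[OF lm])

lemma rhoMB: "\<rho> (0, h) * B = B * \<rho> (0, T h)"
proof -
  have "\<rho> (0, h) * B = \<rho> (1, T h)" using rho_mult[of "(0,h)" "(1,0)"] unfolding sd_mult_def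
    by (simp add: tpow_1[OF lm])
  also have "\<dots> = B * \<rho> (0, T h)" using rho_mult[of "(1,0)" "(0,T h)"] unfolding sd_mult_def
    by (simp add: tpow_0[OF lm])
  finally show ?thesis .
qed

lemma rhoBiB: "Bi * B = 1\<^sub>m k"
  using rho_mult[of "(-1,0)" "(1,0)"] rho00 unfolding sd_mult_def by (simp add: tpow_1[OF lm] T_0[OF lm])

lemma rhoBBi: "B * Bi = 1\<^sub>m k"
  using rho_mult[of "(1,0)" "(-1,0)"] rho00 unfolding sd_mult_def by (simp add: tpow_zero[OF lm])

lemma rho_split: "\<rho> (n, h) = \<rho> (n, 0) * \<rho> (0, h)"
  using rho_mult[of "(n,0)" "(0,h)"] unfolding sd_mult_def by (simp add: tpow_0[OF lm])

lemma rho_succ: "\<rho> (n + 1, 0) = \<rho> (n, 0) * B"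
  using rho_mult[of "(n,0)" "(1,0)"] unfolding sd_mult_def by (simp add: tpow_1[OF lm] T_0[OF lm])

lemma rho_pred: "\<rho> (n - 1, 0) = \<rho> (n, 0) * Bi"
  using rho_mult[of "(n,0)" "(-1,0)"] unfolding sd_mult_def by (simp add: tpow_zero[OF lm])

lemma mv_assoc: "\<rho> g *\<^sub>v (\<rho> g' *\<^sub>v v) = (\<rho> g * \<rho> g') *\<^sub>v v" if "v \<in> carrier_vec k"
  by (rule assoc_mult_mat_vec[symmetric, OF rho_carrier rho_carrier that])

lemma rho_zero: "\<rho> g *\<^sub>v 0\<^sub>v k = 0\<^sub>v k"
  using rho_carrier[of g] by (intro eq_vecI) auto

definition it :: "nat \<Rightarrow> complex vec \<Rightarrow> complex vec" where
  "it j v = ((\<lambda>x. B *\<^sub>v x) ^^ j) v"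

lemma it_0[simp]: "it 0 v = v" unfolding it_def by simp
lemma it_Suc: "it (Suc j) v = B *\<^sub>v it j v" unfolding it_def by simp

lemma it_carrier: "v \<in> carrier_vec k \<Longrightarrow> it j v \<in> carrier_vec k"
  by (induction j) (auto simp: it_Suc intro: mult_mat_vec_carrier[OF rho_carrier])

lemma it_pow: "v \<in> carrier_vec k \<Longrightarrow> it j v = (B ^\<^sub>m j) *\<^sub>v v"
proof (induction j arbitrary: v)
  case 0 thus ?case using rho_carrier[of "(1,0)"] by simp
next
  case (Suc j)
  have "it (Suc j) v = it j (B *\<^sub>v v)" unfolding it_def by (simp add: funpow_Suc_right del: funpow.simps)
  also have "\<dots> = (B ^\<^sub>m j) *\<^sub>v (B *\<^sub>v v)" using Suc rho_carrier[of "(1,0)"] by simp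
  also have "\<dots> = (B ^\<^sub>m Suc j) *\<^sub>v v" using Suc.prems rho_carrier[of "(1,0)"]
    by (simp add: assoc_mult_mat_vec[symmetric, OF pow_carrier_mat[OF rho_carrier] rho_carrier Suc.prems])
  finally show ?case .
qed

lemma it_smult: "v \<in> carrier_vec k \<Longrightarrow> it j (c \<cdot>\<^sub>v v) = c \<cdot>\<^sub>v it j v"
  using it_pow[of v] it_pow[of "c \<cdot>\<^sub>v v"] rho_carrier[of "(1,0)"]
  by (simp add: mult_mat_vec[of _ k k])

lemma it_ip: "v \<in> carrier_vec k \<Longrightarrow> w \<in> carrier_vec k \<Longrightarrow> ip k (it j v) (it j w) = ip k v w"
  by (induction j) (simp_all add: it_Suc ip_unitary[OF rho_carrier rho_uu] it_carrier)

lemma it_ev: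
  assumes v: "v \<in> carrier_vec k" and ev: "\<And>h. \<rho> (0, h) *\<^sub>v v = \<psi> h \<cdot>\<^sub>v v"
  shows "\<rho> (0, h) *\<^sub>v it j v = \<psi> ((T ^^ j) h) \<cdot>\<^sub>v it j v"
proof (induction j arbitrary: h)
  case 0 thus ?case using ev by simp
next
  case (Suc j)
  have c: "it j v \<in> carrier_vec k" using it_carrier[OF v] .
  have "\<rho> (0, h) *\<^sub>v it (Suc j) v = (\<rho> (0, h) * B) *\<^sub>v it j v" unfolding it_Suc using mv_assoc[OF c] by simp
  also have "\<dots> = B *\<^sub>v (\<rho> (0, T h) *\<^sub>v it j v)" unfolding rhoMB using mv_assoc[OF c] by simp
  also have "\<dots> = \<psi> ((T ^^ j) (T h)) \<cdot>\<^sub>v it (Suc j) v" unfolding Suc it_Suc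
    using mult_mat_vec[OF rho_carrier c] by simp
  also have "(T ^^ j) (T h) = (T ^^ Suc j) h" by (simp add: funpow_Suc_right del: funpow.simps)
  finally show ?case .
qed


lemma it_nz: "v \<in> carrier_vec k \<Longrightarrow> v \<noteq> 0\<^sub>v k \<Longrightarrow> it j v \<noteq> 0\<^sub>v k"
  using it_ip[of v v j] ip_self_nz[of v k] it_carrier[of v j] unfolding ip_def by auto

lemma orth_chars:
  assumes v: "v \<in> carrier_vec k" "v \<noteq> 0\<^sub>v k" and ev: "\<And>h. \<rho> (0, h) *\<^sub>v v = \<chi> h \<cdot>\<^sub>v v"
    and ne: "\<not> (\<forall>h. \<chi> ((T ^^ i) h) = \<chi> ((T ^^ j) h))"
  shows "ip k (it i v) (it j v) = 0"
proof -
  obtain h where h: "\<chi> ((T ^^ i) h) \<noteq> \<chi> ((T ^^ j) h)" using ne by blast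
  show ?thesis
    by (rule eigen_orth[OF rho_carrier rho_uu it_carrier[OF v(1)] it_carrier[OF v(1)] it_nz[OF v]
        it_ev[OF v(1) ev] it_ev[OF v(1) ev] h])
qed

lemma struct1: "\<exists>\<chi> v lam l. character \<chi> \<and> v \<in> carrier_vec k \<and> ip k v v = 1 \<and>
   (\<forall>h. \<rho> (0, h) *\<^sub>v v = \<chi> h \<cdot>\<^sub>v v) \<and> it l v = lam \<cdot>\<^sub>v v \<and> 1 \<le> l \<and> l \<le> k \<and>
   (\<forall>h. \<chi> ((T ^^ l) h) = \<chi> h) \<and> (\<forall>j. 1 \<le> j \<and> j < l \<longrightarrow> \<not> (\<forall>h. \<chi> ((T ^^ j) h) = \<chi> h))"
proof -
  have sub: "subsp k (carrier_vec k :: complex vec set)" unfolding subsp_def by auto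
  have ne: "carrier_vec k \<noteq> {0\<^sub>v k :: complex vec}"
  proof -
    have "(unit_vec k 0 :: complex vec) $ 0 \<noteq> 0\<^sub>v k $ 0" using k by simp
    hence "(unit_vec k 0 :: complex vec) \<noteq> 0\<^sub>v k" by metis
    moreover have "(unit_vec k 0 :: complex vec) \<in> carrier_vec k" by simp
    ultimately show ?thesis by blast
  qed
  have Fs: "range (\<lambda>h. \<rho> (0, h)) \<subseteq> carrier_mat k k" using rho_carrier by auto
  have comm: "\<forall>F\<in>range (\<lambda>h. \<rho> (0, h)). \<forall>G\<in>range (\<lambda>h. \<rho> (0, h)). \<forall>w\<in>carrier_vec k.
      F *\<^sub>v (G *\<^sub>v w) = G *\<^sub>v (F *\<^sub>v w)"
  proof (intro ballI)
    fix F G and w :: "complex vec" assume "F \<in> range (\<lambda>h. \<rho> (0, h))" "G \<in> range (\<lambda>h. \<rho> (0, h))" and w: "w \<in> carrier_vec k"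
    then obtain a b where ab: "F = \<rho> (0, a)" "G = \<rho> (0, b)" by blast
    show "F *\<^sub>v (G *\<^sub>v w) = G *\<^sub>v (F *\<^sub>v w)" unfolding ab mv_assoc[OF w] rhoM by (simp add: add.commute)
  qed
  have inv: "\<forall>F\<in>range (\<lambda>h. \<rho> (0, h)). \<forall>w\<in>carrier_vec k. F *\<^sub>v w \<in> carrier_vec k"
  proof (intro ballI)
    fix F and w :: "complex vec" assume "F \<in> range (\<lambda>h. \<rho> (0, h))" "w \<in> carrier_vec k"
    then obtain a where "F = \<rho> (0, a)" by blast
    thus "F *\<^sub>v w \<in> carrier_vec k" using mult_mat_vec_carrier[OF rho_carrier \<open>w \<in> carrier_vec k\<close>] by simp
  qed
  from EIG[OF sub ne Fs inv comm]
  obtain v0 where v0c: "v0 \<in> carrier_vec k"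
    and v0r: "v0 \<noteq> 0\<^sub>v k \<and> (\<forall>F\<in>range (\<lambda>h. \<rho> (0, h)). \<exists>c. F *\<^sub>v v0 = c \<cdot>\<^sub>v v0)"
    by (rule bexE)
  have v0: "v0 \<in> carrier_vec k" "v0 \<noteq> 0\<^sub>v k" using v0c v0r by simp_all
  have evx: "\<exists>c. \<rho> (0, h) *\<^sub>v v0 = c \<cdot>\<^sub>v v0" for h using v0r by simp
  define \<chi> where "\<chi> h = (SOME c. \<rho> (0, h) *\<^sub>v v0 = c \<cdot>\<^sub>v v0)" for h
  have ev0: "\<rho> (0, h) *\<^sub>v v0 = \<chi> h \<cdot>\<^sub>v v0" for h
    unfolding \<chi>_def using evx[of h] by (rule someI_ex)
  have chi: "character \<chi>" unfolding character_def
  proof (intro conjI allI)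
    fix a show "cmod (\<chi> a) = 1" by (rule eigen_norm[OF rho_carrier rho_uu v0 ev0])
  next
    fix a b
    have "\<chi> (a + b) \<cdot>\<^sub>v v0 = \<rho> (0, a + b) *\<^sub>v v0" using ev0 by simp
    also have "\<dots> = (\<rho> (0, a) * \<rho> (0, b)) *\<^sub>v v0" by (simp add: rhoM)
    also have "\<dots> = \<rho> (0, a) *\<^sub>v (\<rho> (0, b) *\<^sub>v v0)" by (rule mv_assoc[OF v0(1), symmetric])
    also have "\<dots> = \<rho> (0, a) *\<^sub>v (\<chi> b \<cdot>\<^sub>v v0)" by (simp only: ev0)
    also have "\<dots> = \<chi> b \<cdot>\<^sub>v (\<rho> (0, a) *\<^sub>v v0)" by (rule mult_mat_vec[OF rho_carrier v0(1)])
    also have "\<dots> = (\<chi> a * \<chi> b) \<cdot>\<^sub>v v0" by (simp add: ev0 smult_smult_assoc ac_simps)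
    finally show "\<chi> (a + b) = \<chi> a * \<chi> b" by (rule smult_cancel_vec[OF v0])
  qed
  have exl: "\<exists>l. 1 \<le> l \<and> l \<le> k \<and> (\<forall>h. \<chi> ((T ^^ l) h) = \<chi> h)"
  proof (rule ccontr)
    assume nex: "\<not> ?thesis"
    have "Suc k \<le> k"
    proof (rule orth_bound[where u = "\<lambda>j. it j v0"])
      fix j assume "j < Suc k"
      show "it j v0 \<in> carrier_vec k \<and> it j v0 \<noteq> 0\<^sub>v k" using it_carrier[OF v0(1)] it_nz[OF v0] by blast
    next
      fix i j assume ij: "i < Suc k" "j < Suc k" "i \<noteq> j"
      have "\<not> (\<forall>h. \<chi> ((T ^^ i) h) = \<chi> ((T ^^ j) h))"
      proof
        assume eq: "\<forall>h. \<chi> ((T ^^ i) h) = \<chi> ((T ^^ j) h)"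
        show False
        proof (cases "i < j")
          case True
          have "\<forall>h. \<chi> ((T ^^ (j - i)) h) = \<chi> h" using char_shift[OF lm _ eq] True by simp
          moreover have "1 \<le> j - i" "j - i \<le> k" using True ij by auto
          ultimately show False using nex by blast
        next
          case False
          hence "j < i" using ij by simp
          have "\<forall>h. \<chi> ((T ^^ (i - j)) h) = \<chi> h" using char_shift[OF lm _, of j i \<chi>] eq \<open>j < i\<close> by simp
          moreover have "1 \<le> i - j" "i - j \<le> k" using \<open>j < i\<close> ij by auto
          ultimately show False using nex by blast
        qed
      qed
      thus "ip k (it i v0) (it j v0) = 0" by (rule orth_chars[OF v0 ev0])
    qed
    thus False by simp
  qed
  define l where "l = (LEAST l. 1 \<le> l \<and> (\<forall>h. \<chi> ((T ^^ l) h) = \<chi> h))"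
  obtain l0 where l0: "1 \<le> l0" "l0 \<le> k" "\<forall>h. \<chi> ((T ^^ l0) h) = \<chi> h" using exl by blast
  have lP: "1 \<le> l \<and> (\<forall>h. \<chi> ((T ^^ l) h) = \<chi> h)"
    unfolding l_def by (rule LeastI[of _ l0]) (use l0 in blast)
  have lle: "l \<le> l0" unfolding l_def by (rule Least_le) (use l0 in blast)
  have lmin: "\<forall>j. 1 \<le> j \<and> j < l \<longrightarrow> \<not> (\<forall>h. \<chi> ((T ^^ j) h) = \<chi> h)"
    unfolding l_def using not_less_Least by blast
  \<comment> \<open>eigenvector of B^l inside the eigenspace\<close>
  define E where "E = {v \<in> carrier_vec k. \<forall>h. \<rho> (0, h) *\<^sub>v v = \<chi> h \<cdot>\<^sub>v v}"
  have subE: "subsp k E" unfolding subsp_def E_def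
  proof (intro conjI ballI allI)
    fix v w h assume v: "v \<in> {v \<in> carrier_vec k. \<forall>h. \<rho> (0, h) *\<^sub>v v = \<chi> h \<cdot>\<^sub>v v}"
      and w: "w \<in> {v \<in> carrier_vec k. \<forall>h. \<rho> (0, h) *\<^sub>v v = \<chi> h \<cdot>\<^sub>v v}"
    have "\<rho> (0, h) *\<^sub>v (v + w) = \<chi> h \<cdot>\<^sub>v (v + w)" for h
    proof -
      have vc: "v \<in> carrier_vec k" and wc: "w \<in> carrier_vec k" using v w by auto
      show ?thesis using v w mult_add_distrib_mat_vec[OF rho_carrier vc wc] by (simp add: smult_add_distrib_vec[OF vc wc])
    qed
    thus "v + w \<in> {v \<in> carrier_vec k. \<forall>h. \<rho> (0, h) *\<^sub>v v = \<chi> h \<cdot>\<^sub>v v}" using v w by auto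
  next
    fix c v assume v: "v \<in> {v \<in> carrier_vec k. \<forall>h. \<rho> (0, h) *\<^sub>v v = \<chi> h \<cdot>\<^sub>v v}"
    have "\<rho> (0, h) *\<^sub>v (c \<cdot>\<^sub>v v) = \<chi> h \<cdot>\<^sub>v (c \<cdot>\<^sub>v v)" for h
    proof -
      have vc: "v \<in> carrier_vec k" using v by auto
      show ?thesis using v mult_mat_vec[OF rho_carrier vc, of _ c] by (simp add: smult_smult_assoc mult.commute)
    qed
    thus "c \<cdot>\<^sub>v v \<in> {v \<in> carrier_vec k. \<forall>h. \<rho> (0, h) *\<^sub>v v = \<chi> h \<cdot>\<^sub>v v}" using v by auto
  qed (auto simp: mult_mat_vec_carrier[OF rho_carrier] rho_zero)
  have neE: "E \<noteq> {0\<^sub>v k}" using v0 ev0 unfolding E_def by blast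
  have invE: "\<forall>w\<in>E. (B ^\<^sub>m l) *\<^sub>v w \<in> E"
  proof
    fix w assume w: "w \<in> E"
    have wc: "w \<in> carrier_vec k" using w E_def by auto
    have "\<rho> (0, h) *\<^sub>v it l w = \<chi> h \<cdot>\<^sub>v it l w" for h
      using it_ev[OF wc, of \<chi> h l] w lP unfolding E_def by simp
    thus "(B ^\<^sub>m l) *\<^sub>v w \<in> E" unfolding E_def it_pow[OF wc, symmetric] using it_carrier[OF wc] by blast
  qed
  obtain v1 lam where v1: "v1 \<in> E" "v1 \<noteq> 0\<^sub>v k" "(B ^\<^sub>m l) *\<^sub>v v1 = lam \<cdot>\<^sub>v v1"
    using EIS[OF subE neE pow_carrier_mat[OF rho_carrier] invE] by blast
  have v1c: "v1 \<in> carrier_vec k" using v1 E_def by auto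
  define s where "s = (\<Sum>i<k. (cmod (v1 $ i))^2)"
  have s: "s > 0"
  proof -
    have "ip k v1 v1 \<noteq> 0" using ip_self_nz[OF v1c v1(2)] .
    moreover have "s \<ge> 0" unfolding s_def by (intro sum_nonneg) auto
    ultimately show ?thesis unfolding ip_self s_def[symmetric] by fastforce
  qed
  define v where "v = complex_of_real (1 / sqrt s) \<cdot>\<^sub>v v1"
  have vc: "v \<in> carrier_vec k" unfolding v_def using v1c by simp
  have vE: "v \<in> E" unfolding v_def using subE v1(1) unfolding subsp_def by blast
  have ipv: "ip k v v = 1"
  proof -
    have "ip k v v = complex_of_real (1 / sqrt s) * cnj (complex_of_real (1 / sqrt s)) * ip k v1 v1"
      unfolding v_def using v1c by (simp add: ip_smult_left ip_smult_right)
    also have "\<dots> = complex_of_real ((1 / sqrt s) * (1 / sqrt s) * s)" unfolding ip_self s_def[symmetric]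
      by (simp only: complex_cnj_complex_of_real of_real_mult)
    also have "(1 / sqrt s) * (1 / sqrt s) * s = 1" using s by simp
    finally show ?thesis by simp
  qed
  have itl: "it l v = lam \<cdot>\<^sub>v v"
    unfolding v_def it_smult[OF v1c] it_pow[OF v1c] v1(3) by (simp add: smult_smult_assoc mult.commute)
  show ?thesis
    apply (rule exI[of _ \<chi>], rule exI[of _ v], rule exI[of _ lam], rule exI[of _ l])
    using chi vc ipv vE itl lP lle l0 lmin unfolding E_def by auto
qed


lemma mlc: fixes A :: "complex mat" assumes A: "A \<in> carrier_mat k k" and u: "\<And>j. u j \<in> carrier_vec k"
  shows "A *\<^sub>v vec k (\<lambda>i. \<Sum>j<l. c j * u j $ i) = vec k (\<lambda>i. \<Sum>j<l. c j * (A *\<^sub>v u j) $ i)"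
proof (rule eq_vecI)
  fix i assume "i < dim_vec (vec k (\<lambda>i. \<Sum>j<l. c j * (A *\<^sub>v u j) $ i))"
  hence i: "i < k" by simp
  have "(A *\<^sub>v vec k (\<lambda>i. \<Sum>j<l. c j * u j $ i)) $ i = (\<Sum>a<k. A $$ (i, a) * (\<Sum>j<l. c j * u j $ a))"
    using mv_index[OF A _ i, of "vec k (\<lambda>i. \<Sum>j<l. c j * u j $ i)"] by simp
  also have "\<dots> = (\<Sum>a<k. \<Sum>j<l. A $$ (i, a) * (c j * u j $ a))" by (simp add: sum_distrib_left)
  also have "\<dots> = (\<Sum>j<l. \<Sum>a<k. A $$ (i, a) * (c j * u j $ a))" by (rule sum.swap)
  also have "\<dots> = (\<Sum>j<l. c j * (A *\<^sub>v u j) $ i)"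
    using mv_index[OF A u i] by (simp add: sum_distrib_left) (intro sum.cong refl, simp add: algebra_simps)
  finally show "(A *\<^sub>v vec k (\<lambda>i. \<Sum>j<l. c j * u j $ i)) $ i = vec k (\<lambda>i. \<Sum>j<l. c j * (A *\<^sub>v u j) $ i) $ i"
    using i by simp
qed (insert A, auto)

lemma struct2: "\<exists>\<chi> u lam. character \<chi> \<and> (\<forall>j. u j \<in> carrier_vec k) \<and>
   (\<forall>j<k. ip k (u j) (u j) = 1) \<and> (\<forall>i<k. \<forall>j<k. i \<noteq> j \<longrightarrow> ip k (u i) (u j) = 0) \<and>
   (\<forall>h j. \<rho> (0, h) *\<^sub>v u j = \<chi> ((T ^^ j) h) \<cdot>\<^sub>v u j) \<and>
   (\<forall>j<k. B *\<^sub>v u j = (if Suc j < k then u (Suc j) else lam \<cdot>\<^sub>v u 0)) \<and>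
   cmod lam = 1 \<and> (\<forall>h. \<chi> ((T ^^ k) h) = \<chi> h)"
proof -
  obtain \<chi> v lam l where chi: "character \<chi>" and vc: "v \<in> carrier_vec k" and ipv: "ip k v v = 1"
    and ev: "\<forall>h. \<rho> (0, h) *\<^sub>v v = \<chi> h \<cdot>\<^sub>v v" and itl: "it l v = lam \<cdot>\<^sub>v v"
    and l1: "1 \<le> l" and lk: "l \<le> k" and lper: "\<forall>h. \<chi> ((T ^^ l) h) = \<chi> h"
    and lmin: "\<forall>j. 1 \<le> j \<and> j < l \<longrightarrow> \<not> (\<forall>h. \<chi> ((T ^^ j) h) = \<chi> h)"
    using struct1 by blast
  have vnz: "v \<noteq> 0\<^sub>v k" using ipv unfolding ip_def by auto
  define u where "u j = it j v" for j
  have uc: "u j \<in> carrier_vec k" for j unfolding u_def using it_carrier[OF vc] .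
  have udim[simp]: "dim_vec (u j) = k" for j using uc[of j] by auto
  have uev: "\<rho> (0, h) *\<^sub>v u j = \<chi> ((T ^^ j) h) \<cdot>\<^sub>v u j" for h j
    unfolding u_def using it_ev[OF vc, of \<chi>] ev by blast
  have unorm: "ip k (u j) (u j) = 1" for j unfolding u_def using it_ip[OF vc vc] ipv by simp
  have uorth: "ip k (u i) (u j) = 0" if ij: "i < l" "j < l" "i \<noteq> j" for i j
  proof -
    have "\<not> (\<forall>h. \<chi> ((T ^^ i) h) = \<chi> ((T ^^ j) h))"
    proof
      assume eq: "\<forall>h. \<chi> ((T ^^ i) h) = \<chi> ((T ^^ j) h)"
      show False
      proof (cases "i < j")
        case True
        have "\<forall>h. \<chi> ((T ^^ (j - i)) h) = \<chi> h" using char_shift[OF lm _ eq] True by simp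
        thus False using spec[OF lmin, of "j - i"] True ij by auto
      next
        case False
        hence "j < i" using ij by simp
        have "\<forall>h. \<chi> ((T ^^ (i - j)) h) = \<chi> h" using char_shift[OF lm _, of j i \<chi>] eq \<open>j < i\<close> by simp
        thus False using spec[OF lmin, of "i - j"] \<open>j < i\<close> ij by auto
      qed
    qed
    thus ?thesis unfolding u_def using orth_chars[OF vc vnz] ev by blast
  qed
  have lam: "cmod lam = 1"
  proof -
    have "ip k (it l v) (it l v) = lam * cnj lam * ip k v v"
      unfolding itl using vc by (simp add: ip_smult_left ip_smult_right)
    hence "lam * cnj lam = 1" using it_ip[OF vc vc, of l] ipv by simp
    hence "complex_of_real ((cmod lam)^2) = 1" using complex_norm_square by metis
    hence "(cmod lam)^2 = 1" by (metis of_real_eq_1_iff)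
    thus ?thesis using norm_ge_zero[of lam] by (auto simp: power2_eq_1_iff)
  qed
  have lam0: "lam \<noteq> 0" using lam by auto
  obtain l' where l': "l = Suc l'" using l1 by (cases l) auto
  have uB: "B *\<^sub>v u j = (if Suc j < l then u (Suc j) else lam \<cdot>\<^sub>v u 0)" if "j < l" for j
  proof (cases "Suc j < l")
    case True thus ?thesis unfolding u_def it_Suc[symmetric] by simp
  next
    case False
    hence "Suc j = l" using that by simp
    thus ?thesis unfolding u_def it_Suc[symmetric] using False itl by simp
  qed
  have BiB: "Bi *\<^sub>v (B *\<^sub>v x) = x" if "x \<in> carrier_vec k" for x
    using mv_assoc[OF that, of "(-1,0)" "(1,0)"] rhoBiB that by simp
  have uBiS: "Bi *\<^sub>v u (Suc j) = u j" if "Suc j < l" for j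
    using uB[of j] that BiB[OF uc[of j]] by simp
  have uBi0: "Bi *\<^sub>v u 0 = (1 / lam) \<cdot>\<^sub>v u l'"
  proof -
    have "B *\<^sub>v u l' = lam \<cdot>\<^sub>v u 0" using uB[of l'] l' by simp
    hence "u l' = Bi *\<^sub>v (lam \<cdot>\<^sub>v u 0)" using BiB[OF uc[of l']] by simp
    also have "\<dots> = lam \<cdot>\<^sub>v (Bi *\<^sub>v u 0)" by (rule mult_mat_vec[OF rho_carrier uc])
    finally have "(1 / lam) \<cdot>\<^sub>v u l' = (1 / lam) \<cdot>\<^sub>v (lam \<cdot>\<^sub>v (Bi *\<^sub>v u 0))" by simp
    also have "\<dots> = Bi *\<^sub>v u 0" using lam0 by (simp add: smult_smult_assoc)
    finally show ?thesis by simp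
  qed
  define lc where "lc c = vec k (\<lambda>i. \<Sum>j<l. c j * u j $ i)" for c
  define S where "S = range lc"
  have lcA: "A *\<^sub>v lc c = vec k (\<lambda>i. \<Sum>j<l. c j * (A *\<^sub>v u j) $ i)" if "A \<in> carrier_mat k k" for A c
    unfolding lc_def by (rule mlc[OF that uc])
  have SM: "\<rho> (0, h) *\<^sub>v x \<in> S" if xS: "x \<in> S" for h x
  proof -
    obtain c where x: "x = lc c" using xS S_def by blast
    have "\<rho> (0, h) *\<^sub>v x = lc (\<lambda>j. c j * \<chi> ((T ^^ j) h))"
      unfolding x lcA[OF rho_carrier] unfolding lc_def uev using uc by (intro eq_vecI) (auto simp: ac_simps)
    thus ?thesis unfolding S_def by simp
  qed
  have SB: "B *\<^sub>v x \<in> S" if xS: "x \<in> S" for x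
  proof -
    obtain c where x: "x = lc c" using xS S_def by blast
    define c' where "c' j = (if j = 0 then lam * c l' else c (j - 1))" for j
    have "B *\<^sub>v x = lc c'"
    proof (rule eq_vecI)
      fix i assume "i < dim_vec (lc c')"
      hence i: "i < k" unfolding lc_def by simp
      have "(B *\<^sub>v x) $ i = (\<Sum>j<l. c j * (B *\<^sub>v u j) $ i)" unfolding x lcA[OF rho_carrier] using i by simp
      also have "\<dots> = (\<Sum>j<l'. c j * u (Suc j) $ i) + c l' * (lam * u 0 $ i)"
        unfolding l' sum.lessThan_Suc using uB l' i uc by (auto intro!: sum.cong)
      also have "\<dots> = (\<Sum>j<l. c' j * u j $ i)"
        unfolding l' sum.lessThan_Suc_shift c'_def by (simp add: ac_simps)
      also have "\<dots> = lc c' $ i" unfolding lc_def using i by simp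
      finally show "(B *\<^sub>v x) $ i = lc c' $ i" .
    qed (insert x rho_carrier[of "(1,0)"], auto simp: lc_def)
    thus ?thesis unfolding S_def by simp
  qed
  have SBi: "Bi *\<^sub>v x \<in> S" if xS: "x \<in> S" for x
  proof -
    obtain c where x: "x = lc c" using xS S_def by blast
    define c' where "c' j = (if j < l' then c (Suc j) else c 0 / lam)" for j
    have "Bi *\<^sub>v x = lc c'"
    proof (rule eq_vecI)
      fix i assume "i < dim_vec (lc c')"
      hence i: "i < k" unfolding lc_def by simp
      have "(Bi *\<^sub>v x) $ i = (\<Sum>j<l. c j * (Bi *\<^sub>v u j) $ i)" unfolding x lcA[OF rho_carrier] using i by simp
      also have "\<dots> = c 0 * ((1 / lam) * u l' $ i) + (\<Sum>j<l'. c (Suc j) * u j $ i)"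
        unfolding l' sum.lessThan_Suc_shift using uBiS l' i uc uBi0 by (auto intro!: sum.cong)
      also have "\<dots> = (\<Sum>j<l. c' j * u j $ i)"
        unfolding l' sum.lessThan_Suc c'_def by (simp add: ac_simps)
      also have "\<dots> = lc c' $ i" unfolding lc_def using i by simp
      finally show "(Bi *\<^sub>v x) $ i = lc c' $ i" .
    qed (insert x rho_carrier[of "(-1,0)"], auto simp: lc_def)
    thus ?thesis unfolding S_def by simp
  qed
  have SC: "S \<subseteq> carrier_vec k" unfolding S_def lc_def by auto
  have Sn: "\<forall>x\<in>S. \<rho> (n, 0) *\<^sub>v x \<in> S" for n
  proof (induction n rule: int_induct[where k = 0])
    case base
    show ?case using rho00 SC by auto
  next
    case (step1 n)
    show ?case
    proof
      fix x assume x: "x \<in> S"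
      have "\<rho> (n + 1, 0) *\<^sub>v x = \<rho> (n, 0) *\<^sub>v (B *\<^sub>v x)"
        unfolding rho_succ using mv_assoc x SC by auto
      thus "\<rho> (n + 1, 0) *\<^sub>v x \<in> S" using step1.IH SB[OF x] by simp
    qed
  next
    case (step2 n)
    show ?case
    proof
      fix x assume x: "x \<in> S"
      have "\<rho> (n - 1, 0) *\<^sub>v x = \<rho> (n, 0) *\<^sub>v (Bi *\<^sub>v x)"
        unfolding rho_pred using mv_assoc x SC by auto
      thus "\<rho> (n - 1, 0) *\<^sub>v x \<in> S" using step2.IH SBi[OF x] by simp
    qed
  qed
  have Sg: "\<rho> g *\<^sub>v x \<in> S" if x: "x \<in> S" for g x
  proof -
    obtain n h where g: "g = (n, h)" by (cases g)
    have "\<rho> g *\<^sub>v x = \<rho> (n, 0) *\<^sub>v (\<rho> (0, h) *\<^sub>v x)"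
      unfolding g using rho_split[of n h] mv_assoc x SC by auto
    thus ?thesis using Sn SM[OF x] by simp
  qed
  have invS: "invariant_subspace k \<rho> S" unfolding invariant_subspace_def
  proof (intro conjI ballI allI)
    show "S \<subseteq> carrier_vec k" by (rule SC)
    have "lc (\<lambda>_. 0) = 0\<^sub>v k" unfolding lc_def by (intro eq_vecI) auto
    thus "0\<^sub>v k \<in> S" unfolding S_def by (metis rangeI)
  next
    fix v w assume "v \<in> S" "w \<in> S"
    then obtain c d where cd: "v = lc c" "w = lc d" unfolding S_def by blast
    have "v + w = lc (\<lambda>j. c j + d j)" unfolding cd lc_def
      by (intro eq_vecI) (auto simp: sum.distrib algebra_simps)
    thus "v + w \<in> S" unfolding S_def by simp
  next
    fix a v assume "v \<in> S"
    then obtain c where cd: "v = lc c" unfolding S_def by blast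
    have "a \<cdot>\<^sub>v v = lc (\<lambda>j. a * c j)" unfolding cd lc_def
      by (intro eq_vecI) (auto simp: sum_distrib_left algebra_simps)
    thus "a \<cdot>\<^sub>v v \<in> S" unfolding S_def by simp
  next
    fix g v assume "v \<in> S" thus "\<rho> g *\<^sub>v v \<in> S" by (rule Sg)
  qed
  have u0S: "u 0 \<in> S"
  proof -
    have "lc (\<lambda>j. if j = 0 then 1 else 0) = u 0"
    proof (rule eq_vecI)
      fix i assume "i < dim_vec (u 0)"
      hence i: "i < k" by simp
      have "(\<Sum>j<l. (if j = 0 then 1 else 0) * u j $ i) = (\<Sum>j<l. if j = 0 then u 0 $ i else 0)"
        by (intro sum.cong) auto
      also have "\<dots> = u 0 $ i" using l1 by simp
      finally show "lc (\<lambda>j. if j = 0 then 1 else 0) $ i = u 0 $ i" unfolding lc_def using i by simp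
    qed (simp add: lc_def)
    thus ?thesis unfolding S_def by (metis rangeI)
  qed
  have "u 0 \<noteq> 0\<^sub>v k" unfolding u_def using vnz by simp
  hence "S \<noteq> {0\<^sub>v k}" using u0S by blast
  hence Sfull: "S = carrier_vec k" using irr invS unfolding irreducible_rep_def by blast
  have ip_lc: "ip k (lc c) (u m) = c m" if m: "m < l" for c m
  proof -
    have "ip k (lc c) (u m) = (\<Sum>i<k. \<Sum>j<l. c j * (u j $ i * cnj (u m $ i)))"
      unfolding ip_def lc_def by (intro sum.cong refl) (simp add: sum_distrib_left sum_distrib_right mult.assoc)
    also have "\<dots> = (\<Sum>j<l. c j * ip k (u j) (u m))"
      unfolding ip_def by (subst sum.swap) (simp add: sum_distrib_left)
    also have "\<dots> = (\<Sum>j<l. if j = m then c m else 0)"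
      using uorth m unorm by (intro sum.cong refl) auto
    also have "\<dots> = c m" using m by simp
    finally show ?thesis .
  qed
  have one: "(\<Sum>m<l. cnj (u m $ i) * u m $ i) = 1" if i: "i < k" for i
  proof -
    have "unit_vec k i \<in> S" using Sfull by simp
    then obtain c where c: "unit_vec k i = lc c" unfolding S_def by blast
    have cm: "c m = cnj (u m $ i)" if m: "m < l" for m
    proof -
      have "c m = ip k (unit_vec k i) (u m)" using ip_lc[OF m] c by simp
      also have "\<dots> = (\<Sum>a<k. if a = i then cnj (u m $ i) else 0)"
        unfolding ip_def using i by (intro sum.cong refl) auto
      also have "\<dots> = cnj (u m $ i)" using i by simp
      finally show ?thesis .
    qed
    have "1 = (unit_vec k i :: complex vec) $ i" using i by simp
    also have "\<dots> = (\<Sum>m<l. c m * u m $ i)" unfolding c lc_def using i by simp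
    also have "\<dots> = (\<Sum>m<l. cnj (u m $ i) * u m $ i)" using cm by (intro sum.cong refl) auto
    finally show ?thesis by simp
  qed
  have "(of_nat k :: complex) = (\<Sum>i<k. \<Sum>m<l. cnj (u m $ i) * u m $ i)" using one by simp
  also have "\<dots> = (\<Sum>m<l. ip k (u m) (u m))" unfolding ip_def by (subst sum.swap) (simp add: ac_simps)
  also have "\<dots> = of_nat l" using unorm by simp
  finally have lk_eq: "l = k" by (metis of_nat_eq_iff)
  show ?thesis
    apply (rule exI[of _ \<chi>], rule exI[of _ u], rule exI[of _ lam])
    using chi uc unorm uorth uev uB lam lper lk_eq by auto
qed


lemma unit_cnj: "cmod a = 1 \<Longrightarrow> a * cnj a = 1"
  using complex_norm_square[of a] by simp

lemma U_mult: assumes A: "A \<in> carrier_mat k k" and w: "\<And>j. w j \<in> carrier_vec k" and i: "i < k" and j: "j < k"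
  shows "(A * mat k k (\<lambda>(i, j). w j $ i)) $$ (i, j) = (A *\<^sub>v w j) $ i"
proof -
  have "col (mat k k (\<lambda>(i, j). w j $ i)) j = w j" using w[of j] j by (intro eq_vecI) auto
  thus ?thesis using A i j by simp
qed

lemma U_mnm: assumes w: "\<And>j. w j \<in> carrier_vec k" and i: "i < k" and j: "j < k"
  shows "(mat k k (\<lambda>(i, j). w j $ i) * mnm k n f) $$ (i, j) = f j * w (idx k j n) $ i"
proof -
  have "(mat k k (\<lambda>(i, j). w j $ i) * mnm k n f) $$ (i, j) = (\<Sum>a\<in>{0..<k}. w a $ i * mnm k n f $$ (a, j))"
    using i j by (simp add: scalar_prod_def)
  also have "\<dots> = (\<Sum>a\<in>{0..<k}. if a = idx k j n then f j * w (idx k j n) $ i else 0)"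
    using j by (intro sum.cong refl) (auto simp: mnm_index)
  also have "\<dots> = f j * w (idx k j n) $ i" using idx_lt[OF k] by simp
  finally show ?thesis .
qed

lemma part3: "\<exists>U z \<chi>. unitary_mat k U \<and> cmod z = 1 \<and> character \<chi> \<and> factors_through T k \<chi> \<and>
               (\<forall>g. \<rho> g = U * alpha T k z \<chi> g * ctrans U)"
proof -
  obtain \<chi> u lam where chi: "character \<chi>" and uc: "\<And>j. u j \<in> carrier_vec k"
    and unorm: "\<And>j. j < k \<Longrightarrow> ip k (u j) (u j) = 1"
    and uorth: "\<And>i j. i < k \<Longrightarrow> j < k \<Longrightarrow> i \<noteq> j \<Longrightarrow> ip k (u i) (u j) = 0"
    and uev: "\<And>h j. \<rho> (0, h) *\<^sub>v u j = \<chi> ((T ^^ j) h) \<cdot>\<^sub>v u j"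
    and uB: "\<And>j. j < k \<Longrightarrow> B *\<^sub>v u j = (if Suc j < k then u (Suc j) else lam \<cdot>\<^sub>v u 0)"
    and lam: "cmod lam = 1" and per: "\<forall>h. \<chi> ((T ^^ k) h) = \<chi> h"
    using struct2 by metis
  have lam0: "lam \<noteq> 0" using lam by auto
  define z where "z = cis (Arg lam / real k)"
  have zk: "z ^ k = lam"
  proof -
    have "z ^ k = cis (Arg lam)" unfolding z_def DeMoivre using k by simp
    also have "\<dots> = sgn lam" using cis_Arg[OF lam0] .
    also have "\<dots> = lam" using lam by (simp add: sgn_eq)
    finally show ?thesis .
  qed
  have z1: "cmod z = 1" unfolding z_def by simp
  have z0: "z \<noteq> 0" using z1 by auto
  define w where "w j = (inverse z) ^ j \<cdot>\<^sub>v u j" for j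
  have wc: "w j \<in> carrier_vec k" for j unfolding w_def using uc by simp
  have wdim[simp]: "dim_vec (w j) = k" for j using wc[of j] by auto
  have wev: "\<rho> (0, h) *\<^sub>v w j = \<chi> ((T ^^ j) h) \<cdot>\<^sub>v w j" for h j
    unfolding w_def mult_mat_vec[OF rho_carrier uc] uev by (simp add: smult_smult_assoc mult.commute)
  have iz: "inverse z * cnj (inverse z) = 1" using z1 by (intro unit_cnj) (simp add: norm_inverse)
  have wip: "ip k (w j) (w i) = (if i = j then 1 else 0)" if i: "i < k" and j: "j < k" for i j
  proof -
    have "ip k (w j) (w i) = (inverse z) ^ j * cnj ((inverse z) ^ i) * ip k (u j) (u i)"
      unfolding w_def using uc by (simp add: ip_smult_left ip_smult_right)
    also have "\<dots> = (if i = j then 1 else 0)"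
    proof (cases "i = j")
      case True
      have "(inverse z) ^ j * cnj ((inverse z) ^ j) = (inverse z * cnj (inverse z)) ^ j"
        by (simp add: power_mult_distrib)
      thus ?thesis using True iz unorm[OF j] by simp
    next
      case False thus ?thesis using uorth[OF j i] by simp
    qed
    finally show ?thesis .
  qed
  have wB: "B *\<^sub>v w j = z \<cdot>\<^sub>v w (Suc j mod k)" if j: "j < k" for j
  proof -
    have "B *\<^sub>v w j = (inverse z) ^ j \<cdot>\<^sub>v (B *\<^sub>v u j)" unfolding w_def by (rule mult_mat_vec[OF rho_carrier uc])
    also have "\<dots> = z \<cdot>\<^sub>v w (Suc j mod k)"
    proof (cases "Suc j < k")
      case True
      have zz: "z * (inverse z * x) = x" for x using z0 by (metis mult.assoc mult.left_neutral right_inverse)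
      show ?thesis using True uB[OF j] unfolding w_def by (simp add: smult_smult_assoc zz)
    next
      case False
      hence sj: "Suc j = k" using j by simp
      have "(inverse z) ^ j * lam = z" unfolding zk[symmetric] sj[symmetric] using z0
        by (simp add: field_simps)
      thus ?thesis using False uB[OF j] sj unfolding w_def by (simp add: smult_smult_assoc)
    qed
    finally show ?thesis .
  qed
  define U where "U = mat k k (\<lambda>(i, j). w j $ i)"
  have Uc: "U \<in> carrier_mat k k" unfolding U_def by simp
  have UU: "ctrans U * U = 1\<^sub>m k"
  proof (rule eq_matI)
    fix i j assume "i < dim_row (1\<^sub>m k)" "j < dim_col (1\<^sub>m k)"
    hence i: "i < k" and j: "j < k" by auto
    have "(ctrans U * U) $$ (i, j) = (\<Sum>a\<in>{0..<k}. cnj (w i $ a) * w j $ a)"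
      using i j unfolding U_def ctrans_def by (simp add: scalar_prod_def)
    also have "\<dots> = ip k (w j) (w i)" unfolding ip_def by (simp add: atLeast0LessThan ac_simps)
    also have "\<dots> = 1\<^sub>m k $$ (i, j)" using wip[OF i j] i j by simp
    finally show "(ctrans U * U) $$ (i, j) = 1\<^sub>m k $$ (i, j)" .
  qed (auto simp: U_def ctrans_def)
  have ctU: "ctrans U \<in> carrier_mat k k" unfolding U_def ctrans_def by simp
  have UU': "U * ctrans U = 1\<^sub>m k" by (rule mat_mult_left_right_inverse[OF ctU Uc UU])
  have unit: "unitary_mat k U" unfolding unitary_mat_def using Uc UU UU' by blast
  have fac: "factors_through T k \<chi>" using factors_iff[OF chi] per by blast
  let ?a = "alpha T k z \<chi>"
  have ac: "?a g \<in> carrier_mat k k" for g unfolding alpha_mnm[OF k] by simp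
  have ahom: "?a (sd_mult T g g') = ?a g * ?a g'" for g g' by (rule alpha_hom[OF lm chi fac k z1])
  have a00: "?a (0, 0) = 1\<^sub>m k"
    unfolding alpha_mnm[OF k] using Tpow_0[OF lm] chi0[OF chi] mnm_one by simp
  have aM: "\<rho> (0, h) * U = U * ?a (0, h)" for h
  proof (rule eq_matI)
    fix i j assume "i < dim_row (U * ?a (0, h))" "j < dim_col (U * ?a (0, h))"
    hence i: "i < k" and j: "j < k" using carrier_matD[OF ac[of "(0,h)"]] Uc by auto
    show "(\<rho> (0, h) * U) $$ (i, j) = (U * ?a (0, h)) $$ (i, j)"
      unfolding U_def alpha_mnm[OF k] U_mult[OF rho_carrier wc i j] U_mnm[OF wc i j] wev
      using i j wc[of j] by (simp add: idx0)
  qed (insert carrier_matD[OF ac[of "(0,h)"]] Uc carrier_matD[OF rho_carrier[of "(0,h)"]], auto)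
  have aB: "B * U = U * ?a (1, 0)"
  proof (rule eq_matI)
    fix i j assume "i < dim_row (U * ?a (1, 0))" "j < dim_col (U * ?a (1, 0))"
    hence i: "i < k" and j: "j < k" using carrier_matD[OF ac[of "(1,0)"]] Uc by auto
    show "(B * U) $$ (i, j) = (U * ?a (1, 0)) $$ (i, j)"
      unfolding U_def alpha_mnm[OF k] U_mult[OF rho_carrier wc i j] U_mnm[OF wc i j] wB[OF j]
      using i j wc idx_one[OF k] by (simp add: Tpow_0[OF lm] chi0[OF chi])
  qed (insert carrier_matD[OF ac[of "(1,0)"]] Uc carrier_matD[OF rho_carrier[of "(1,0)"]], auto)
  have a1m1: "?a (1, 0) * ?a (-1, 0) = 1\<^sub>m k"
    using ahom[of "(1,0)" "(-1,0)"] a00 unfolding sd_mult_def by (simp add: tpow_zero[OF lm])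
  have aBi: "Bi * U = U * ?a (-1, 0)"
  proof -
    have BiUc: "Bi * U \<in> carrier_mat k k" by (rule mult_carrier_mat[OF rho_carrier Uc])
    have "Bi * U = Bi * U * (?a (1, 0) * ?a (-1, 0))" using a1m1 right_mult_one_mat[OF BiUc] by simp
    also have "\<dots> = (Bi * U * ?a (1, 0)) * ?a (-1, 0)" by (rule assoc_mult_mat[symmetric, OF BiUc ac ac])
    also have "Bi * U * ?a (1, 0) = Bi * (U * ?a (1, 0))" by (rule assoc_mult_mat[OF rho_carrier Uc ac])
    also have "\<dots> = Bi * (B * U)" unfolding aB ..
    also have "\<dots> = (Bi * B) * U" by (rule assoc_mult_mat[symmetric, OF rho_carrier rho_carrier Uc])
    also have "\<dots> = U" using rhoBiB Uc by simp
    finally show ?thesis .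
  qed
  have step: "\<rho> (n, 0) * X * U = U * (?a (n, 0) * Y)"
    if IH: "\<rho> (n, 0) * U = U * ?a (n, 0)" and XY: "X * U = U * Y" and X: "X \<in> carrier_mat k k"
      and Y: "Y \<in> carrier_mat k k" for n X Y
  proof -
    have "\<rho> (n, 0) * X * U = \<rho> (n, 0) * (X * U)" by (rule assoc_mult_mat[OF rho_carrier X Uc])
    also have "\<dots> = \<rho> (n, 0) * (U * Y)" unfolding XY ..
    also have "\<dots> = (\<rho> (n, 0) * U) * Y" by (rule assoc_mult_mat[symmetric, OF rho_carrier Uc Y])
    also have "\<dots> = (U * ?a (n, 0)) * Y" unfolding IH ..
    also have "\<dots> = U * (?a (n, 0) * Y)" by (rule assoc_mult_mat[OF Uc ac Y])
    finally show ?thesis .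
  qed
  have an: "\<rho> (n, 0) * U = U * ?a (n, 0)" for n
  proof (induction n rule: int_induct[where k = 0])
    case base show ?case using rho00 a00 Uc by simp
  next
    case (step1 n)
    have "?a (n + 1, 0) = ?a (n, 0) * ?a (1, 0)"
      using ahom[of "(n,0)" "(1,0)"] unfolding sd_mult_def by (simp add: tpow_1[OF lm] T_0[OF lm])
    thus ?case unfolding rho_succ using step[OF step1.IH aB rho_carrier ac] by simp
  next
    case (step2 n)
    have "?a (n - 1, 0) = ?a (n, 0) * ?a (-1, 0)"
      using ahom[of "(n,0)" "(-1,0)"] unfolding sd_mult_def by (simp add: tpow_zero[OF lm])
    thus ?case unfolding rho_pred using step[OF step2.IH aBi rho_carrier ac] by simp
  qed
  have ag: "\<rho> g * U = U * ?a g" for g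
  proof -
    obtain n h where g: "g = (n, h)" by (cases g)
    have "?a (n, h) = ?a (n, 0) * ?a (0, h)"
      using ahom[of "(n,0)" "(0,h)"] unfolding sd_mult_def by (simp add: tpow_0[OF lm])
    thus ?thesis unfolding g rho_split[of n h] using step[OF an aM rho_carrier ac] by simp
  qed
  have "\<rho> g = U * ?a g * ctrans U" for g
  proof -
    have "\<rho> g = \<rho> g * (U * ctrans U)" using UU' right_mult_one_mat[OF rho_carrier] by simp
    also have "\<dots> = (\<rho> g * U) * ctrans U" by (rule assoc_mult_mat[symmetric, OF rho_carrier Uc ctU])
    finally show ?thesis unfolding ag .
  qed
  thus ?thesis using unit z1 chi fac by blast
qed

end

theorem proposition4p1:
  fixes T :: "'h::ab_group_add \<Rightarrow> 'h" and k :: nat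
  assumes "lambda_module T" and "k \<ge> 1"
  shows "(\<forall>z \<chi>. cmod z = 1 \<and> character \<chi> \<and> factors_through T k \<chi> \<longrightarrow>
            unitary_rep T k (alpha T k z \<chi>))
       \<and> (\<forall>z \<chi>. cmod z = 1 \<and> character \<chi> \<and> factors_through T k \<chi> \<and>
            (\<forall>l. 1 \<le> l \<and> l < k \<longrightarrow> \<not> factors_through T l \<chi>) \<longrightarrow>
            irreducible_rep k (alpha T k z \<chi>))
       \<and> (\<forall>\<rho>. unitary_rep T k \<rho> \<and> irreducible_rep k \<rho> \<longrightarrow>
            (\<exists>U z \<chi>. unitary_mat k U \<and> cmod z = 1 \<and> character \<chi> \<and> factors_through T k \<chi> \<and>
               (\<forall>g. \<rho> g = U * alpha T k z \<chi> g * ctrans U)))"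
  proof -
  have k: "k > 0" using assms(2) by simp
  show ?thesis
  proof (intro conjI)
    show "\<forall>z \<chi>. cmod z = 1 \<and> character \<chi> \<and> factors_through T k \<chi> \<longrightarrow>
            unitary_rep T k (alpha T k z \<chi>)" by (rule part1[OF assms(1) k])
    show "\<forall>z \<chi>. cmod z = 1 \<and> character \<chi> \<and> factors_through T k \<chi> \<and>
            (\<forall>l. 1 \<le> l \<and> l < k \<longrightarrow> \<not> factors_through T l \<chi>) \<longrightarrow>
            irreducible_rep k (alpha T k z \<chi>)" by (rule part2[OF assms(1) k])
    show "\<forall>\<rho>. unitary_rep T k \<rho> \<and> irreducible_rep k \<rho> \<longrightarrow>
            (\<exists>U z \<chi>. unitary_mat k U \<and> cmod z = 1 \<and> character \<chi> \<and> factors_through T k \<chi> \<and>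
               (\<forall>g. \<rho> g = U * alpha T k z \<chi> g * ctrans U))"
      using part3[OF assms(1) k] by blast
  qed
qed

end
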